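(* Let $f:\mathbb{C}\to\mathbb{C}$ be holomorphic, $W(z)=|f(z)|^2$ on $\mathbb{R}^2\cong\mathbb{C}$, and let $e$ be a heteroclinic orbit connecting two distinct nondegenerate zeros $a^-,a^+$ of $W$. Let $m\in\mathbb{C}$, $|m|=1$, be such that $e'=\sqrt{2}\,m\,\overline{f(e)}$ on $\mathbb{R}$ (such $m$ exists). Then for every $h\in H^1(\mathbb{R};\mathbb{R}^2)\cong H^1(\mathbb{R};\mathbb{C})$, $$\int_{\mathbb{R}}\big(|h'|^2+h^\top D^2W(e)h\big)\,dx=\int_{\mathbb{R}}\big|h'-\sqrt{2}\,m\,\overline{f'(e)\,h}\big|^2\,dx .$$
   Context: We identify $\mathbb{R}^2$ with $\mathbb{C}$ via $(u_1,u_2)\mapsto u_1+iu_2$; in the left side $h$ is viewed as a vector in $\mathbb{R}^2$, in the right side as a complex-valued function, and products like $f'(e)h$ are complex multiplications. A zero $a$ of $W$ is nondegenerate if $D^2W(a)$ is positive definite. A heteroclinic orbit connecting $a^-\neq a^+$ (zeros of $W$) is a solution $e\in C^2(\mathbb{R};\mathbb{R}^2)$ of $e''=\nabla W(e)$ on $\mathbb{R}$ with $e(x)\to a^\pm$ as $x\to\pm\infty$. *)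

theory Defs
  imports "HOL-Analysis.Analysis"
begin

text \<open>We identify R^2 with the type complex (a euclidean_space with inner product
  (u1+iu2) . (v1+iv2) = u1 v1 + u2 v2).\<close>

definition grad :: "(complex \<Rightarrow> real) \<Rightarrow> complex \<Rightarrow> complex" where
  "grad W z = (THE g. (W has_derivative (\<lambda>v. g \<bullet> v)) (at z))"

text \<open>Hessian D^2W(z), as the (linear) derivative of the gradient; h^T D^2W(z) h = h . hess W z h.\<close>
definition hess :: "(complex \<Rightarrow> real) \<Rightarrow> complex \<Rightarrow> complex \<Rightarrow> complex" where
  "hess W z = (THE L. (grad W has_derivative L) (at z))"

definition nondegenerate_zero :: "(complex \<Rightarrow> real) \<Rightarrow> complex \<Rightarrow> bool" where
  "nondegenerate_zero W a \<longleftrightarrow> W a = 0 \<and> (\<forall>v. v \<noteq> 0 \<longrightarrow> v \<bullet> hess W a v > 0)"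

definition heteroclinic :: "(complex \<Rightarrow> real) \<Rightarrow> complex \<Rightarrow> complex \<Rightarrow> (real \<Rightarrow> complex)
    \<Rightarrow> (real \<Rightarrow> complex) \<Rightarrow> (real \<Rightarrow> complex) \<Rightarrow> bool" where
  "heteroclinic W am ap e e' e'' \<longleftrightarrow>
     (\<forall>x. (e has_vector_derivative e' x) (at x)) \<and>
     (\<forall>x. (e' has_vector_derivative e'' x) (at x)) \<and>
     continuous_on UNIV e'' \<and>
     (\<forall>x. e'' x = grad W (e x)) \<and>
     (e \<longlongrightarrow> am) at_bot \<and> (e \<longlongrightarrow> ap) at_top"

definition test_fun :: "(real \<Rightarrow> real) \<Rightarrow> bool" where
  "test_fun \<phi> \<longleftrightarrow>
     (\<forall>n x. ((deriv ^^ n) \<phi> has_real_derivative (deriv ^^ Suc n) \<phi> x) (at x)) \<and>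
     compact (closure {x. \<phi> x \<noteq> 0})"

definition square_integrable :: "(real \<Rightarrow> complex) \<Rightarrow> bool" where
  "square_integrable h \<longleftrightarrow> h \<in> borel_measurable lborel \<and> integrable lborel (\<lambda>x. (cmod (h x))\<^sup>2)"

definition H1_weak :: "(real \<Rightarrow> complex) \<Rightarrow> (real \<Rightarrow> complex) \<Rightarrow> bool" where
  "H1_weak h g \<longleftrightarrow> square_integrable h \<and> square_integrable g \<and>
     (\<forall>\<phi>. test_fun \<phi> \<longrightarrow>
        (\<integral>x. h x * complex_of_real (deriv \<phi> x) \<partial>lborel) = - (\<integral>x. g x * complex_of_real (\<phi> x) \<partial>lborel))"

end

theory Submission
  imports Defs "HOL-Computational_Algebra.Polynomial" "HOL-Complex_Analysis.Complex_Analysis"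
begin

fun Ck :: "nat \<Rightarrow> (real \<Rightarrow> real) \<Rightarrow> bool" where
  "Ck 0 f = True"
| "Ck (Suc k) f = (\<exists>f'. (\<forall>x. (f has_real_derivative f' x) (at x)) \<and> Ck k f')"

definition smooth :: "(real \<Rightarrow> real) \<Rightarrow> bool" where "smooth f \<longleftrightarrow> (\<forall>k. Ck k f)"

lemma Ck_Suc_imp: "Ck (Suc k) f \<Longrightarrow> Ck k f"
proof (induction k arbitrary: f)
  case 0 then show ?case by simp
next
  case (Suc k)
  then obtain f' where "\<forall>x. (f has_real_derivative f' x) (at x)" "Ck (Suc k) f'" by auto
  with Suc.IH show ?case by auto
qed

lemma Ck_const: "Ck k (\<lambda>x. c)"
proof (induction k arbitrary: c)
  case (Suc k)
  have "\<forall>x. ((\<lambda>x. c) has_real_derivative (\<lambda>x. 0) x) (at x)" by simp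
  moreover have "Ck k (\<lambda>x. 0)" using Suc.IH by simp
  ultimately show ?case by (metis Ck.simps(2))
qed simp

lemma Ck_add: "Ck k f \<Longrightarrow> Ck k g \<Longrightarrow> Ck k (\<lambda>x. f x + g x)"
proof (induction k arbitrary: f g)
  case (Suc k)
  then obtain f' g' where f: "\<forall>x. (f has_real_derivative f' x) (at x)" "Ck k f'"
    and g: "\<forall>x. (g has_real_derivative g' x) (at x)" "Ck k g'" by auto
  have "\<forall>x. ((\<lambda>x. f x + g x) has_real_derivative (\<lambda>x. f' x + g' x) x) (at x)"
    using f g by (auto intro: derivative_intros)
  with Suc.IH f g show ?case by auto
qed simp

lemma Ck_mult: "Ck k f \<Longrightarrow> Ck k g \<Longrightarrow> Ck k (\<lambda>x. f x * g x)"
proof (induction k arbitrary: f g)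
  case (Suc k)
  then obtain f' g' where f: "\<forall>x. (f has_real_derivative f' x) (at x)" "Ck k f'"
    and g: "\<forall>x. (g has_real_derivative g' x) (at x)" "Ck k g'" by auto
  have fk: "Ck k f" "Ck k g" using Suc.prems Ck_Suc_imp by blast+
  have "\<forall>x. ((\<lambda>x. f x * g x) has_real_derivative (\<lambda>x. f' x * g x + f x * g' x) x) (at x)"
    using f g by (auto intro!: derivative_eq_intros)
  moreover have "Ck k (\<lambda>x. f' x * g x + f x * g' x)"
    using Suc.IH f g fk by (intro Ck_add) auto
  ultimately show ?case by auto
qed simp

lemma Ck_affine: "Ck k f \<Longrightarrow> Ck k (\<lambda>x. f (c * x + d))"
proof (induction k arbitrary: f)
  case (Suc k)
  then obtain f' where f: "\<forall>x. (f has_real_derivative f' x) (at x)" "Ck k f'" by auto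
  have "\<forall>x. ((\<lambda>x. f (c * x + d)) has_real_derivative (\<lambda>x. f' (c * x + d) * c) x) (at x)"
    using f by (auto intro!: derivative_eq_intros DERIV_chain2[where f=f])
  moreover have "Ck k (\<lambda>x. f' (c * x + d) * c)"
    using Suc.IH f by (intro Ck_mult Ck_const) auto
  ultimately show ?case by auto
qed simp

lemma smooth_const: "smooth (\<lambda>x. c)" by (simp add: smooth_def Ck_const)
lemma smooth_add: "smooth f \<Longrightarrow> smooth g \<Longrightarrow> smooth (\<lambda>x. f x + g x)"
  by (simp add: smooth_def Ck_add)
lemma smooth_mult: "smooth f \<Longrightarrow> smooth g \<Longrightarrow> smooth (\<lambda>x. f x * g x)"
  by (simp add: smooth_def Ck_mult)
lemma smooth_affine: "smooth f \<Longrightarrow> smooth (\<lambda>x. f (c * x + d))"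
  by (simp add: smooth_def Ck_affine)
lemma smooth_diff: "smooth f \<Longrightarrow> smooth g \<Longrightarrow> smooth (\<lambda>x. f x - g x)"
proof -
  assume "smooth f" "smooth g"
  then have "smooth (\<lambda>x. f x + (-1) * g x)" by (intro smooth_add smooth_mult smooth_const)
  then show ?thesis by simp
qed
lemma smooth_power: "smooth f \<Longrightarrow> smooth (\<lambda>x. f x ^ n)"
  by (induction n) (auto intro: smooth_mult smooth_const)

lemma smooth_antideriv:
  assumes "\<And>x. (F has_real_derivative f x) (at x)" "smooth f"
  shows "smooth F"
  unfolding smooth_def
proof
  fix k show "Ck k F"
    using assms by (cases k) (auto simp: smooth_def)
qed

lemma smooth_deriv:
  assumes "smooth f"
  shows "(\<forall>x. (f has_real_derivative deriv f x) (at x)) \<and> smooth (deriv f)"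
proof -
  from assms have "Ck (Suc 0) f" by (simp add: smooth_def)
  then obtain f' where f': "\<forall>x. (f has_real_derivative f' x) (at x)" by auto
  have df: "deriv f = f'" using f' DERIV_imp_deriv by blast
  have "Ck k (deriv f)" for k
  proof -
    from assms have "Ck (Suc k) f" by (simp add: smooth_def)
    then obtain g where g: "\<forall>x. (f has_real_derivative g x) (at x)" "Ck k g" by auto
    have "g = f'" using g f' DERIV_unique by blast
    with g df show ?thesis by simp
  qed
  then show ?thesis using f' df by (simp add: smooth_def)
qed

lemma smooth_test_fun:
  assumes "smooth f" "compact (closure {x. f x \<noteq> 0})"
  shows "test_fun f"
proof -
  have s: "smooth ((deriv ^^ n) f)" for n
    by (induction n) (use assms smooth_deriv in auto)
  show ?thesis unfolding test_fun_def
    using smooth_deriv[OF s] assms(2) by simp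
qed

lemma smooth_continuous: "smooth f \<Longrightarrow> continuous_on UNIV f"
  using smooth_deriv by (meson DERIV_isCont continuous_at_imp_continuous_on)

definition sexp :: "real \<Rightarrow> real" where "sexp x = (if x > 0 then exp (- 1 / x) else 0)"

fun Pn :: "nat \<Rightarrow> real poly" where
  "Pn 0 = 1"
| "Pn (Suc n) = [:0,0,1:] * (Pn n - pderiv (Pn n))"

definition Dn :: "nat \<Rightarrow> real \<Rightarrow> real" where
  "Dn n x = (if x > 0 then poly (Pn n) (1 / x) * exp (- 1 / x) else 0)"

lemma poly_exp_lim: "((\<lambda>t::real. poly p t / exp t) \<longlongrightarrow> 0) at_top"
proof -
  have "((\<lambda>t. \<Sum>i\<le>degree p. coeff p i * (t ^ i / exp t)) \<longlongrightarrow> (\<Sum>i\<le>degree p. coeff p i * 0)) at_top"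
    by (intro tendsto_sum tendsto_mult tendsto_const) (use tendsto_power_div_exp_0 in auto)
  then show ?thesis
    by (simp add: poly_altdef sum_divide_distrib)
qed

lemma Dn_deriv: "(Dn n has_real_derivative Dn (Suc n) x) (at x)"
proof (cases "x > 0")
  case True
  let ?p = "Pn n"
  have d: "((\<lambda>x. poly ?p (1 / x) * exp (- 1 / x)) has_real_derivative
      (poly (pderiv ?p) (1/x) * (- 1 / x^2) * exp (- 1 / x) + poly ?p (1/x) * (exp (- 1 / x) * (1 / x^2)))) (at x)"
    using True
    by (auto intro!: derivative_eq_intros DERIV_chain2[where f="poly ?p"] poly_DERIV simp: power2_eq_square field_simps)
  have e: "poly (pderiv ?p) (1/x) * (- 1 / x^2) * exp (- 1 / x) + poly ?p (1/x) * (exp (- 1 / x) * (1 / x^2))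
       = Dn (Suc n) x"
    using True by (simp add: Dn_def algebra_simps power2_eq_square)
  show ?thesis
    apply (rule has_field_derivative_transform_within_open[where S="{0<..}"])
    using d e True by (auto simp: Dn_def)
next
  case False
  show ?thesis
  proof (cases "x < 0")
    case True
    have "((\<lambda>x. 0) has_real_derivative 0) (at x)" by simp
    then have "(Dn n has_real_derivative 0) (at x)"
      apply (rule has_field_derivative_transform_within_open[where S="{..<0}"])
      using True by (auto simp: Dn_def)
    moreover have "Dn (Suc n) x = 0" using True by (simp add: Dn_def)
    ultimately show ?thesis by simp
  next
    case False
    with \<open>\<not> x > 0\<close> have x: "x = 0" by simp
    have r: "((\<lambda>y. (Dn n y - Dn n 0) / (y - 0)) \<longlongrightarrow> 0) (at_right 0)"
    proof -
      have lim: "((\<lambda>y. poly (pCons 0 (Pn n)) (inverse y) / exp (inverse y)) \<longlongrightarrow> 0) (at_right 0)"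
        by (rule filterlim_compose[OF poly_exp_lim filterlim_inverse_at_top_right])
      show ?thesis
        apply (rule Lim_transform_eventually[OF lim])
        apply (rule eventually_at_rightI[where b=1])
        by (auto simp: Dn_def exp_minus field_simps)
    qed
    have l: "((\<lambda>y. (Dn n y - Dn n 0) / (y - 0)) \<longlongrightarrow> 0) (at_left 0)"
    proof -
      have "\<forall>\<^sub>F y in at_left (0::real). 0 = (Dn n y - Dn n 0) / (y - 0)"
        by (rule eventually_at_leftI[where a="-1"]) (auto simp: Dn_def)
      then show ?thesis by (rule Lim_transform_eventually[OF tendsto_const])
    qed
    have "Dn (Suc n) 0 = 0" by (simp add: Dn_def)
    then show ?thesis unfolding x has_field_derivative_iff
      using l r by (simp add: filterlim_at_split)
  qed
qed

lemma smooth_sexp: "smooth sexp"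
proof -
  have "Ck k (Dn n)" for k n
  proof (induction k arbitrary: n)
    case (Suc k)
    then show ?case using Dn_deriv by auto
  qed simp
  moreover have "Dn 0 = sexp" by (auto simp: Dn_def sexp_def fun_eq_iff)
  ultimately show ?thesis by (metis smooth_def)
qed

lemma sexp_bounds: "0 \<le> sexp x" "sexp x \<le> 1"
  by (auto simp: sexp_def)

lemma sexp_pos: "sexp x > 0 \<longleftrightarrow> x > 0"
  by (auto simp: sexp_def)

lemma ae_zero_Ioi:
  fixes w :: "real \<Rightarrow> complex"
  assumes w: "integrable lborel w"
    and z: "\<And>x. (\<integral>y\<in>{x<..}. w y \<partial>lborel) = 0"
    and zU: "(\<integral>y. w y \<partial>lborel) = 0"
  shows "AE x in lborel. w x = 0"
proof (rule sigma_finite_measure.density_zero[OF sigma_finite_lborel w])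
  fix A :: "real set" assume "A \<in> sets lborel"
  then have A: "A \<in> sigma_sets UNIV (range greaterThan)"
    by (simp add: sets_lborel borel_Ioi)
  have ist: "Int_stable (range (greaterThan :: real \<Rightarrow> real set))"
  proof -
    have "{a<..} \<inter> {b<..} = {max a b<..}" for a b :: real by auto
    then show ?thesis by (auto simp: Int_stable_def)
  qed
  have closed: "range greaterThan \<subseteq> Pow (UNIV::real set)" by auto
  show "(\<integral>y\<in>A. w y \<partial>lborel) = 0"
    using ist closed A
  proof (induct rule: sigma_sets_induct_disjoint)
    case (basic A) then show ?case using z by auto
  next
    case empty then show ?case by (simp add: set_lebesgue_integral_def)
  next
    case (compl A)
    have As: "A \<in> sets lborel"
      using compl(1) by (simp add: sets_lborel borel_Ioi)
    have "(\<integral>y\<in>UNIV - A. w y \<partial>lborel) = (\<integral>y. w y - indicator A y *\<^sub>R w y \<partial>lborel)"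
      unfolding set_lebesgue_integral_def
      by (intro Bochner_Integration.integral_cong) (auto simp: indicator_def)
    also have "\<dots> = (\<integral>y. w y \<partial>lborel) - (\<integral>y\<in>A. w y \<partial>lborel)"
      unfolding set_lebesgue_integral_def
      using w As by (intro Bochner_Integration.integral_diff integrable_mult_indicator) auto
    finally show ?case using compl zU by simp
  next
    case (union F)
    have Fs: "\<And>i. F i \<in> sets lborel"
      using union(2) by (auto simp: sets_lborel borel_Ioi)
    have "(\<integral>y\<in>(\<Union>i. F i). w y \<partial>lborel) = (\<Sum>i. (\<integral>y\<in>F i. w y \<partial>lborel))"
    proof (rule lebesgue_integral_countable_add)
      show "\<And>i j. i \<noteq> j \<Longrightarrow> F i \<inter> F j = {}" using union(1) by (auto simp: disjoint_family_on_def)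
      show "set_integrable lborel (\<Union> (range F)) w"
        unfolding set_integrable_def
        using w Fs by (intro integrable_mult_indicator) auto
    qed (use Fs in auto)
    then show ?case using union by simp
  qed
qed

lemma ae_zero_intervals:
  fixes v :: "real \<Rightarrow> complex"
  assumes meas: "v \<in> borel_measurable lborel"
    and loc: "\<And>a b. set_integrable lborel {a..b} v"
    and z: "\<And>a b. a < b \<Longrightarrow> (\<integral>y\<in>{a<..<b}. v y \<partial>lborel) = 0"
  shows "AE x in lborel. v x = 0"
proof -
  have N: "AE x in lborel. indicator {-real N<..<real N} x *\<^sub>R v x = 0" for N :: nat
  proof (rule ae_zero_Ioi)
    let ?w = "\<lambda>x. indicator {-real N<..<real N} x *\<^sub>R v x"
    have "set_integrable lborel {-real N<..<real N} v"
      by (rule set_integrable_subset[OF loc[of "-real N" "real N"]]) auto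
    then show iw: "integrable lborel ?w" by (simp add: set_integrable_def)
    have Ioo: "(\<integral>y\<in>{a<..<b}. v y \<partial>lborel) = 0" for a b
    proof (cases "a < b")
      case True then show ?thesis using z by simp
    next
      case False then show ?thesis by (simp add: set_lebesgue_integral_def)
    qed
    show "(\<integral>y. ?w y \<partial>lborel) = 0" using Ioo unfolding set_lebesgue_integral_def .
    fix x
    have "(\<integral>y\<in>{x<..}. ?w y \<partial>lborel) = (\<integral>y\<in>{max x (-real N)<..<real N}. v y \<partial>lborel)"
      unfolding set_lebesgue_integral_def
      by (intro Bochner_Integration.integral_cong) (auto simp: indicator_def)
    then show "(\<integral>y\<in>{x<..}. ?w y \<partial>lborel) = 0" using Ioo by simp
  qed
  then have "AE x in lborel. \<forall>N::nat. indicator {-real N<..<real N} x *\<^sub>R v x = 0"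
    by (subst AE_all_countable) auto
  then show ?thesis
  proof (rule AE_mp, intro AE_I2 impI)
    fix x assume h: "\<forall>N::nat. indicator {-real N<..<real N} x *\<^sub>R v x = 0"
    obtain N :: nat where "\<bar>x\<bar> < real N" using reals_Archimedean2 by blast
    with h[rule_format, of N] show "v x = 0" by (auto simp: indicator_def split: if_splits)
  qed
qed

definition bump :: "real \<Rightarrow> real" where "bump x = sexp x * sexp (1 - x)"
definition chi :: "nat \<Rightarrow> real \<Rightarrow> real" where "chi n x = 1 - (1 - bump x) ^ n"

lemma smooth_bump: "smooth bump"
proof -
  have "smooth (\<lambda>x. sexp x * sexp ((-1) * x + 1))"
    by (intro smooth_mult smooth_sexp smooth_affine)
  moreover have "(\<lambda>x. sexp x * sexp ((-1) * x + 1)) = bump" by (auto simp: bump_def fun_eq_iff)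
  ultimately show ?thesis by simp
qed

lemma bump_bounds: "0 \<le> bump x" "bump x \<le> 1"
  using sexp_bounds[of x] sexp_bounds[of "1-x"] by (auto simp: bump_def intro: mult_le_one)

lemma bump_pos: "0 < x \<Longrightarrow> x < 1 \<Longrightarrow> 0 < bump x"
  using sexp_pos[of x] sexp_pos[of "1-x"] by (auto simp: bump_def)

lemma bump_zero: "x \<notin> {0<..<1} \<Longrightarrow> bump x = 0"
  by (auto simp: bump_def sexp_def)

lemma chi_zero: "x \<notin> {0<..<1} \<Longrightarrow> chi n x = 0"
  by (simp add: chi_def bump_zero)

lemma chi_bounds: "0 \<le> chi n x" "chi n x \<le> 1"
  using bump_bounds[of x] by (auto simp: chi_def power_le_one)

lemma chi_le_ind: "chi n x \<le> indicator {0<..<1} x"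
  using chi_bounds[of n x] chi_zero[of x n] by (auto simp: indicator_def)

lemma chi_lim: "(\<lambda>n. chi n x) \<longlonglongrightarrow> indicator {0<..<1} x"
proof (cases "x \<in> {0<..<1}")
  case True
  then have "0 < bump x" using bump_pos by auto
  then have "(\<lambda>n. (1 - bump x) ^ n) \<longlonglongrightarrow> 0"
    using bump_bounds[of x] by (intro LIMSEQ_power_zero) auto
  then have "(\<lambda>n. 1 - (1 - bump x) ^ n) \<longlonglongrightarrow> 1 - 0"
    by (intro tendsto_diff tendsto_const)
  then show ?thesis using True by (simp add: chi_def)
next
  case False
  then show ?thesis by (simp add: chi_zero)
qed

lemma smooth_chi: "smooth (chi n)"
  unfolding chi_def[abs_def]
  by (intro smooth_diff smooth_const smooth_power smooth_bump)

lemma integrable_cont_supp: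
  fixes f :: "real \<Rightarrow> 'b::{banach, second_countable_topology}"
  assumes "continuous_on UNIV f" "\<And>x. x \<notin> {A..B} \<Longrightarrow> f x = 0"
  shows "integrable lborel f"
proof -
  have "integrable lborel (\<lambda>x. indicat_real {A..B} x *\<^sub>R f x)"
    by (rule borel_integrable_compact) (auto intro: continuous_on_subset[OF assms(1)])
  moreover have "(\<lambda>x. indicat_real {A..B} x *\<^sub>R f x) = f"
    using assms(2) by (auto simp: fun_eq_iff indicator_def)
  ultimately show ?thesis by simp
qed

lemma test_fun_antideriv:
  fixes psi :: "real \<Rightarrow> real"
  assumes sm: "smooth psi" and supp: "\<And>x. x \<notin> {A<..<B} \<Longrightarrow> psi x = 0"
    and int0: "(\<integral>x. psi x \<partial>lborel) = 0"
  shows "\<exists>\<Phi>. test_fun \<Phi> \<and> deriv \<Phi> = psi"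
proof -
  define \<Phi> :: "real \<Rightarrow> real" where "\<Phi> x = (LBINT t=ereal A..ereal x. psi t)" for x
  have cont: "continuous_on UNIV psi" using smooth_continuous sm by blast
  have d: "(\<Phi> has_real_derivative psi x) (at x)" for x
  proof -
    let ?a = "min A x - 1" and ?b = "max A x + 1"
    have "((\<lambda>u. LBINT t=ereal A..ereal u. psi t) has_vector_derivative psi x) (at x within {?a..?b})"
      by (rule interval_integral_FTC2) (auto intro: continuous_on_subset[OF cont])
    moreover have "at x within {?a..?b} = at x"
      by (rule at_within_open_subset[of x "{?a<..<?b}"]) auto
    ultimately show ?thesis unfolding \<Phi>_def has_real_derivative_iff_has_vector_derivative by simp
  qed
  have sm\<Phi>: "smooth \<Phi>" by (rule smooth_antideriv[OF d sm])
  have d\<Phi>: "deriv \<Phi> = psi" using d DERIV_imp_deriv by blast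
  have \<Phi>0: "\<Phi> x = 0" if "x \<notin> {A..B}" for x
  proof (cases "x \<le> A")
    case True
    have "\<Phi> x = - (LBINT t=x..A. psi t)" unfolding \<Phi>_def by (rule interval_integral_endpoints_reverse)
    also have "(LBINT t=x..A. psi t) = (LBINT t:{x..A}. psi t)" using True by (rule interval_integral_Icc)
    also have "\<dots> = 0" unfolding set_lebesgue_integral_def
      using supp by (subst Bochner_Integration.integral_cong[where g="\<lambda>x. 0"]) (auto simp: indicator_def)
    finally show ?thesis by simp
  next
    case False
    then have "A \<le> x" by simp
    have "\<Phi> x = (LBINT t:{A..x}. psi t)" unfolding \<Phi>_def using \<open>A \<le> x\<close> by (rule interval_integral_Icc)
    also have "\<dots> = (\<integral>t. psi t \<partial>lborel)" unfolding set_lebesgue_integral_def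
    proof (intro Bochner_Integration.integral_cong refl)
      fix t show "indicat_real {A..x} t *\<^sub>R psi t = psi t"
        using supp[of t] that False by (cases "t \<in> {A<..<B}") (auto simp: indicator_def)
    qed
    finally show ?thesis using int0 by simp
  qed
  have "bounded {x. \<Phi> x \<noteq> 0}"
  proof (rule bounded_subset[of "{A..B}"])
    show "{x. \<Phi> x \<noteq> 0} \<subseteq> {A..B}" using \<Phi>0 by blast
  qed simp
  then have "compact (closure {x. \<Phi> x \<noteq> 0})" by (simp add: compact_closure)
  then have "test_fun \<Phi>" by (rule smooth_test_fun[OF sm\<Phi>])
  then show ?thesis using d\<Phi> by blast
qed

lemma aff_in: "(a::real) < b \<Longrightarrow> ((x - a) / (b - a) \<in> {0<..<1}) = (x \<in> {a<..<b})"
proof -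
  assume "a < b"
  then have p: "b - a > 0" by simp
  show ?thesis using p by (auto simp: divide_less_eq_1_pos zero_less_divide_iff)
qed

lemma dbr_interval:
  fixes u :: "real \<Rightarrow> complex"
  assumes meas[measurable]: "u \<in> borel_measurable lborel"
    and loc: "\<And>a b. set_integrable lborel {a..b} u"
    and weak: "\<And>\<phi>. test_fun \<phi> \<Longrightarrow> (\<integral>x. u x * complex_of_real (deriv \<phi> x) \<partial>lborel) = 0"
    and ab: "a < b"
  shows "(\<integral>x\<in>{a<..<b}. u x \<partial>lborel) = of_real (b - a) * (\<integral>x\<in>{0<..<1}. u x \<partial>lborel)"
proof -
  define psi where "psi n x = chi n ((x - a) / (b - a)) / (b - a) - chi n x" for n x
  have aff: "(x - a)/(b-a) = (1/(b-a)) * x + (-a/(b-a))" for x by (simp add: diff_divide_distrib)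
  have sm_aff: "smooth (\<lambda>x. chi n ((x - a) / (b - a)))" for n
  proof -
    have "smooth (\<lambda>x. chi n ((1/(b-a)) * x + (-a/(b-a))))"
      by (intro smooth_affine smooth_chi)
    then show ?thesis unfolding aff .
  qed
  have sm: "smooth (psi n)" for n
  proof -
    have "smooth (\<lambda>x. chi n ((x - a) / (b - a)) * (1/(b-a)) - chi n x)"
      by (intro smooth_diff smooth_mult sm_aff smooth_chi smooth_const)
    then show ?thesis unfolding psi_def[abs_def] by simp
  qed
  have cont_psi: "continuous_on UNIV (psi n)" for n using sm smooth_continuous by blast
  have supp: "psi n x = 0" if "x \<notin> {min a 0<..<max b 1}" for n x
  proof -
    have "x \<notin> {a<..<b}" "x \<notin> {0<..<1}" using that by auto
    then show ?thesis using aff_in[OF ab, of x] by (simp add: psi_def chi_zero)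
  qed
  have int_chi: "integrable lborel (chi n)" for n
    by (rule integrable_cont_supp[where A=0 and B=1]) (use smooth_continuous smooth_chi chi_zero in auto)
  have int_chi_aff: "integrable lborel (\<lambda>x. chi n ((x - a) / (b - a)))" for n
  proof (rule integrable_cont_supp[where A=a and B=b])
    show "continuous_on UNIV (\<lambda>x. chi n ((x - a) / (b - a)))" using sm_aff smooth_continuous by blast
    fix x assume "x \<notin> {a..b}"
    then show "chi n ((x - a) / (b - a)) = 0" using aff_in[OF ab, of x] chi_zero by auto
  qed
  have int_eq: "(\<integral>x. chi n ((x - a) / (b - a)) \<partial>lborel) = (b - a) * (\<integral>x. chi n x \<partial>lborel)" for n
  proof -
    have e: "(\<lambda>x. chi n ((a + (b - a) * x - a) / (b - a))) = chi n" using ab by (auto simp: fun_eq_iff)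
    show ?thesis
      using lborel_integral_real_affine[of "b-a" "\<lambda>x. chi n ((x - a) / (b - a))" a] ab e by simp
  qed
  have int0: "(\<integral>x. psi n x \<partial>lborel) = 0" for n
    unfolding psi_def
    using int_eq[of n] ab
    by (subst Bochner_Integration.integral_diff) (auto intro: integrable_divide int_chi_aff int_chi simp: integral_divide_zero)
  have w0: "(\<integral>x. u x * complex_of_real (psi n x) \<partial>lborel) = 0" for n
  proof -
    obtain \<Phi> where "test_fun \<Phi>" "deriv \<Phi> = psi n"
      using test_fun_antideriv[OF sm supp int0] by blast
    with weak show ?thesis by metis
  qed
  define f where "f x = u x * complex_of_real (indicator {a<..<b} x / (b - a) - indicator {0<..<1} x)" for x
  define w where "w x = norm (u x) * (indicator {a..b} x / (b - a) + indicator {0..1} x)" for x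
  have lim: "(\<lambda>n. \<integral>x. u x * complex_of_real (psi n x) \<partial>lborel) \<longlonglongrightarrow> (\<integral>x. f x \<partial>lborel)"
  proof (rule integral_dominated_convergence[where w=w])
    show "f \<in> borel_measurable lborel" unfolding f_def by measurable
    show "(\<lambda>x. u x * complex_of_real (psi n x)) \<in> borel_measurable lborel" for n
      using cont_psi[of n] by (measurable; rule borel_measurable_continuous_onI) 
    have i1: "integrable lborel (\<lambda>x. indicat_real {a..b} x *\<^sub>R norm (u x))"
      using set_integrable_norm[OF loc[of a b]] by (simp add: set_integrable_def)
    have i2: "integrable lborel (\<lambda>x. indicat_real {0..1} x *\<^sub>R norm (u x))"
      using set_integrable_norm[OF loc[of 0 1]] by (simp add: set_integrable_def)
    have "integrable lborel (\<lambda>x. indicat_real {a..b} x *\<^sub>R norm (u x) / (b - a) + indicat_real {0..1} x *\<^sub>R norm (u x))"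
      by (intro Bochner_Integration.integrable_add integrable_divide i1 i2)
    then show "integrable lborel w" unfolding w_def by (simp add: algebra_simps)
    show "AE x in lborel. (\<lambda>n. u x * complex_of_real (psi n x)) \<longlonglongrightarrow> f x"
    proof (intro AE_I2)
      fix x
      have "(\<lambda>n. psi n x) \<longlonglongrightarrow> indicator {0<..<1} ((x - a) / (b - a)) / (b - a) - indicator {0<..<1} x"
        unfolding psi_def using ab by (intro tendsto_intros chi_lim) auto
      also have "indicator {0<..<1} ((x - a) / (b - a)) = (indicator {a<..<b} x :: real)"
        using aff_in[OF ab, of x] by (simp add: indicator_def)
      finally show "(\<lambda>n. u x * complex_of_real (psi n x)) \<longlonglongrightarrow> f x"
        unfolding f_def by (intro tendsto_intros)
    qed
    show "AE x in lborel. norm (u x * complex_of_real (psi n x)) \<le> w x" for n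
    proof (intro AE_I2)
      fix x
      have c1: "chi n ((x - a) / (b - a)) \<le> indicator {a..b} x"
        using chi_le_ind[of n "(x - a) / (b - a)"] aff_in[OF ab, of x] chi_bounds[of n]
        by (auto simp: indicator_def)
      have c2: "chi n x \<le> indicator {0..1} x"
        using chi_le_ind[of n x] chi_bounds[of n] by (auto simp: indicator_def)
      have "\<bar>psi n x\<bar> \<le> chi n ((x - a) / (b - a)) / (b - a) + chi n x"
        unfolding psi_def using chi_bounds[of n] ab by (auto simp: abs_le_iff)
      also have "\<dots> \<le> indicator {a..b} x / (b - a) + indicator {0..1} x"
        using c1 c2 ab by (intro add_mono divide_right_mono) auto
      finally have "\<bar>psi n x\<bar> \<le> indicator {a..b} x / (b - a) + indicator {0..1} x" .
      then show "norm (u x * complex_of_real (psi n x)) \<le> w x"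
        unfolding w_def by (simp add: norm_mult mult_left_mono)
    qed
  qed
  then have f0: "(\<integral>x. f x \<partial>lborel) = 0" using w0 by (simp add: LIMSEQ_const_iff)
  have io1: "set_integrable lborel {a<..<b} u" by (rule set_integrable_subset[OF loc[of a b]]) auto
  have io2: "set_integrable lborel {0<..<1} u" by (rule set_integrable_subset[OF loc[of 0 1]]) auto
  have "f = (\<lambda>x. (indicat_real {a<..<b} x *\<^sub>R u x) / complex_of_real (b - a) - indicat_real {0<..<1} x *\<^sub>R u x)"
    by (auto simp: f_def fun_eq_iff indicator_def right_diff_distrib)
  then have "(\<integral>x. f x \<partial>lborel) = (\<integral>x\<in>{a<..<b}. u x \<partial>lborel) / complex_of_real (b - a) - (\<integral>x\<in>{0<..<1}. u x \<partial>lborel)"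
    using io1 io2 unfolding set_lebesgue_integral_def set_integrable_def
    by (simp add: Bochner_Integration.integral_diff integrable_divide integral_divide_zero)
  with f0 ab show ?thesis by (simp add: field_simps)
qed

lemma set_integrable_const_Icc: "set_integrable lborel {a..b::real} (\<lambda>x. c :: complex)"
  unfolding set_integrable_def
  by (intro integrable_scaleR_left integrable_real_indicator) (auto simp: emeasure_lborel_Icc_eq)

lemma dbr:
  fixes u :: "real \<Rightarrow> complex"
  assumes meas[measurable]: "u \<in> borel_measurable lborel"
    and loc: "\<And>a b. set_integrable lborel {a..b} u"
    and weak: "\<And>\<phi>. test_fun \<phi> \<Longrightarrow> (\<integral>x. u x * complex_of_real (deriv \<phi> x) \<partial>lborel) = 0"
  shows "AE x in lborel. u x = (\<integral>x\<in>{0<..<1}. u x \<partial>lborel)"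
proof -
  define c where "c = (\<integral>x\<in>{0<..<1}. u x \<partial>lborel)"
  have "AE x in lborel. u x - c = 0"
  proof (rule ae_zero_intervals)
    show "(\<lambda>x. u x - c) \<in> borel_measurable lborel" by measurable
    show "set_integrable lborel {a..b} (\<lambda>x. u x - c)" for a b
      using loc[of a b] set_integrable_const_Icc[of a b c] unfolding set_integrable_def
      by (simp add: scaleR_diff_right Bochner_Integration.integrable_diff)
    fix a b :: real assume ab: "a < b"
    have i1: "set_integrable lborel {a<..<b} u" by (rule set_integrable_subset[OF loc[of a b]]) auto
    have i2: "set_integrable lborel {a<..<b} (\<lambda>x. c)" by (rule set_integrable_subset[OF set_integrable_const_Icc[of a b c]]) auto
    have "(\<integral>x\<in>{a<..<b}. u x - c \<partial>lborel) = (\<integral>x\<in>{a<..<b}. u x \<partial>lborel) - (\<integral>x\<in>{a<..<b}. c \<partial>lborel)"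
      using i1 i2 unfolding set_lebesgue_integral_def set_integrable_def
      by (simp add: scaleR_diff_right Bochner_Integration.integral_diff)
    also have "(\<integral>x\<in>{a<..<b}. c \<partial>lborel) = of_real (b - a) * c"
      using ab by (simp add: set_integral_const emeasure_lborel_Ioo scaleR_conv_of_real)
    also have "(\<integral>x\<in>{a<..<b}. u x \<partial>lborel) = of_real (b - a) * c"
      unfolding c_def by (rule dbr_interval[OF meas loc weak ab])
    finally show "(\<integral>x\<in>{a<..<b}. u x - c \<partial>lborel) = 0" by simp
  qed
  then show ?thesis unfolding c_def by simp
qed

lemma integrable_pair_prod:
  fixes P Q :: "real \<Rightarrow> complex"
  assumes P: "integrable lborel P" and Q: "integrable lborel Q"
    and S[measurable]: "S \<in> sets (lborel \<Otimes>\<^sub>M lborel)"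
  shows "integrable (lborel \<Otimes>\<^sub>M lborel) (\<lambda>z. indicator S z *\<^sub>R (P (fst z) * Q (snd z)))"
proof (rule integrableI_bounded)
  have [measurable]: "P \<in> borel_measurable lborel" "Q \<in> borel_measurable lborel"
    using P Q by auto
  show "(\<lambda>z. indicator S z *\<^sub>R (P (fst z) * Q (snd z))) \<in> borel_measurable (lborel \<Otimes>\<^sub>M lborel)"
    by measurable
  have "(\<integral>\<^sup>+ z. ennreal (norm (indicator S z *\<^sub>R (P (fst z) * Q (snd z)))) \<partial>(lborel \<Otimes>\<^sub>M lborel))
      \<le> (\<integral>\<^sup>+ z. ennreal (norm (P (fst z))) * ennreal (norm (Q (snd z))) \<partial>(lborel \<Otimes>\<^sub>M lborel))"
    by (intro nn_integral_mono) (auto simp: indicator_def norm_mult ennreal_mult)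
  also have "\<dots> = (\<integral>\<^sup>+ x. \<integral>\<^sup>+ t. ennreal (norm (P x)) * ennreal (norm (Q t)) \<partial>lborel \<partial>lborel)"
    by (subst lborel.nn_integral_fst[symmetric]) auto
  also have "\<dots> = (\<integral>\<^sup>+ x. ennreal (norm (P x)) * (\<integral>\<^sup>+ t. ennreal (norm (Q t)) \<partial>lborel) \<partial>lborel)"
    by (subst nn_integral_cmult) auto
  also have "\<dots> = (\<integral>\<^sup>+ x. ennreal (norm (P x)) \<partial>lborel) * (\<integral>\<^sup>+ t. ennreal (norm (Q t)) \<partial>lborel)"
    by (subst nn_integral_multc) auto
  also have "\<dots> < \<infinity>"
    using P Q by (auto simp: integrable_iff_bounded ennreal_mult_less_top)
  finally show "(\<integral>\<^sup>+ z. ennreal (norm (indicator S z *\<^sub>R (P (fst z) * Q (snd z)))) \<partial>(lborel \<Otimes>\<^sub>M lborel)) < \<infinity>" .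
qed

lemma fubini_tri:
  fixes P Q :: "real \<Rightarrow> complex"
  assumes P: "integrable lborel P" and Q: "integrable lborel Q"
  shows "(\<integral>t. (\<integral>x. indicator {..<t} x *\<^sub>R P x \<partial>lborel) * Q t \<partial>lborel)
       = (\<integral>x. P x * (\<integral>t. indicator {x<..} t *\<^sub>R Q t \<partial>lborel) \<partial>lborel)"
proof -
  define S where "S = {z::real\<times>real. fst z < snd z}"
  have "Measurable.pred (lborel \<Otimes>\<^sub>M lborel) (\<lambda>z::real\<times>real. fst z < snd z)" by measurable
  then have Sm[measurable]: "S \<in> sets (lborel \<Otimes>\<^sub>M lborel)" unfolding S_def pred_def by (simp add: space_pair_measure)
  define f where "f x t = indicator S (x, t) *\<^sub>R (P x * Q t)" for x t
  have "integrable (lborel \<Otimes>\<^sub>M lborel) (\<lambda>z. indicator S z *\<^sub>R (P (fst z) * Q (snd z)))"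
    by (rule integrable_pair_prod[OF P Q Sm])
  moreover have "(\<lambda>z. indicator S z *\<^sub>R (P (fst z) * Q (snd z))) = case_prod f"
    by (auto simp: f_def fun_eq_iff)
  ultimately have I: "integrable (lborel \<Otimes>\<^sub>M lborel) (case_prod f)" by simp
  have "(\<integral>t. (\<integral>x. f x t \<partial>lborel) \<partial>lborel) = (\<integral>x. (\<integral>t. f x t \<partial>lborel) \<partial>lborel)"
    by (rule lborel_pair.Fubini_integral[OF I])
  moreover have "(\<integral>x. f x t \<partial>lborel) = (\<integral>x. indicator {..<t} x *\<^sub>R P x \<partial>lborel) * Q t" for t
  proof -
    have e: "(\<lambda>x. f x t) = (\<lambda>x. (indicator {..<t} x *\<^sub>R P x) * Q t)"
      by (auto simp: f_def S_def fun_eq_iff indicator_def)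
    show ?thesis unfolding e by (rule integral_mult_left_zero)
  qed
  moreover have "(\<integral>t. f x t \<partial>lborel) = P x * (\<integral>t. indicator {x<..} t *\<^sub>R Q t \<partial>lborel)" for x
  proof -
    have e: "(\<lambda>t. f x t) = (\<lambda>t. P x * (indicator {x<..} t *\<^sub>R Q t))"
      by (auto simp: f_def S_def fun_eq_iff indicator_def)
    show ?thesis unfolding e by (rule integral_mult_right_zero)
  qed
  ultimately show ?thesis by simp
qed

lemma meas_indef:
  fixes q :: "real \<Rightarrow> complex"
  assumes [measurable]: "q \<in> borel_measurable lborel"
  shows "(\<lambda>x. \<integral>t\<in>{a..x}. q t \<partial>lborel) \<in> borel_measurable lborel"
proof -
  have "(\<lambda>z::real\<times>real. if a \<le> snd z \<and> snd z \<le> fst z then q (snd z) else 0) \<in> borel_measurable (lborel \<Otimes>\<^sub>M lborel)"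
    by measurable
  moreover have "(\<lambda>z::real\<times>real. if a \<le> snd z \<and> snd z \<le> fst z then q (snd z) else 0) = case_prod (\<lambda>x t. indicator {a..x} t *\<^sub>R q t)"
    by (auto simp: fun_eq_iff indicator_def)
  ultimately have "case_prod (\<lambda>x t. indicator {a..x} t *\<^sub>R q t) \<in> borel_measurable (lborel \<Otimes>\<^sub>M lborel)" by simp
  then show ?thesis unfolding set_lebesgue_integral_def
    by (rule sigma_finite_measure.borel_measurable_lebesgue_integral[OF sigma_finite_lborel])
qed

lemma integrable_mult_bdd:
  fixes f g :: "real \<Rightarrow> complex"
  assumes "integrable lborel f" "g \<in> borel_measurable lborel" "\<And>x. norm (g x) \<le> C"
  shows "integrable lborel (\<lambda>x. f x * g x)"
proof (rule Bochner_Integration.integrable_bound[where f="\<lambda>x. \<bar>C\<bar> * norm (f x)"])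
  show "integrable lborel (\<lambda>x. \<bar>C\<bar> * norm (f x))" using assms(1) by auto
  show "(\<lambda>x. f x * g x) \<in> borel_measurable lborel" using assms(1,2) by auto
  show "AE x in lborel. norm (f x * g x) \<le> norm (\<bar>C\<bar> * norm (f x))"
  proof (intro AE_I2)
    fix x
    have "norm (f x * g x) = norm (f x) * norm (g x)" by (simp add: norm_mult)
    also have "\<dots> \<le> norm (f x) * \<bar>C\<bar>" using assms(3)[of x] by (intro mult_left_mono) auto
    finally show "norm (f x * g x) \<le> norm (\<bar>C\<bar> * norm (f x))" by (simp add: mult.commute)
  qed
qed

lemma indef_bound:
  fixes q :: "real \<Rightarrow> complex"
  assumes loc: "\<And>c d. set_integrable lborel {c..d} q" and x: "x \<le> b"
  shows "norm (\<integral>t\<in>{a..x}. q t \<partial>lborel) \<le> (\<integral>t\<in>{a..b}. norm (q t) \<partial>lborel)"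
proof -
  have "norm (\<integral>t\<in>{a..x}. q t \<partial>lborel) \<le> (\<integral>t. norm (indicator {a..x} t *\<^sub>R q t) \<partial>lborel)"
    unfolding set_lebesgue_integral_def by (rule integral_norm_bound)
  also have "\<dots> \<le> (\<integral>t. indicator {a..b} t *\<^sub>R norm (q t) \<partial>lborel)"
  proof (rule integral_mono)
    show "integrable lborel (\<lambda>t. norm (indicator {a..x} t *\<^sub>R q t))"
      by (rule integrable_norm) (use loc[of a x] in \<open>simp add: set_integrable_def\<close>)
    show "integrable lborel (\<lambda>t. indicator {a..b} t *\<^sub>R norm (q t))"
      using set_integrable_norm[OF loc[of a b]] unfolding set_integrable_def by auto
    show "norm (indicator {a..x} t *\<^sub>R q t) \<le> indicator {a..b} t *\<^sub>R norm (q t)" for t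
      using x by (auto simp: indicator_def)
  qed
  finally show ?thesis unfolding set_lebesgue_integral_def .
qed

lemma prod_ftc:
  fixes p q :: "real \<Rightarrow> complex"
  assumes ab: "a \<le> b"
    and pm[measurable]: "p \<in> borel_measurable lborel" and qm[measurable]: "q \<in> borel_measurable lborel"
    and pl: "\<And>c d. set_integrable lborel {c..d} p" and ql: "\<And>c d. set_integrable lborel {c..d} q"
  shows "(\<integral>x\<in>{a..b}. p x * (\<integral>t\<in>{a..x}. q t \<partial>lborel) + (\<integral>t\<in>{a..x}. p t \<partial>lborel) * q x \<partial>lborel)
      = (\<integral>t\<in>{a..b}. p t \<partial>lborel) * (\<integral>t\<in>{a..b}. q t \<partial>lborel)"
proof -
  define PP where "PP x = (\<integral>t\<in>{a..x}. p t \<partial>lborel)" for x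
  define QQ where "QQ x = (\<integral>t\<in>{a..x}. q t \<partial>lborel)" for x
  define Pt where "Pt x = indicator {a..b} x *\<^sub>R p x" for x
  define Qt where "Qt x = indicator {a..b} x *\<^sub>R q x" for x
  have PtI: "integrable lborel Pt" using pl[of a b] unfolding Pt_def set_integrable_def .
  have QtI: "integrable lborel Qt" using ql[of a b] unfolding Qt_def set_integrable_def .
  have PPm[measurable]: "PP \<in> borel_measurable lborel" unfolding PP_def by (rule meas_indef) simp
  have QQm[measurable]: "QQ \<in> borel_measurable lborel" unfolding QQ_def by (rule meas_indef) simp
  define QQt where "QQt x = indicator {a..b} x *\<^sub>R QQ x" for x
  define PPt where "PPt x = indicator {a..b} x *\<^sub>R PP x" for x
  have QQt_bd: "norm (QQt x) \<le> (\<integral>t\<in>{a..b}. norm (q t) \<partial>lborel)" for x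
  proof (cases "x \<in> {a..b}")
    case True then show ?thesis unfolding QQt_def QQ_def using indef_bound[OF ql, of x b a] by simp
  next
    case False
    have "0 \<le> (\<integral>t\<in>{a..b}. norm (q t) \<partial>lborel)" unfolding set_lebesgue_integral_def
      by (rule integral_nonneg_AE) auto
    then show ?thesis using False unfolding QQt_def by simp
  qed
  have PPt_bd: "norm (PPt x) \<le> (\<integral>t\<in>{a..b}. norm (p t) \<partial>lborel)" for x
  proof (cases "x \<in> {a..b}")
    case True then show ?thesis unfolding PPt_def PP_def using indef_bound[OF pl, of x b a] by simp
  next
    case False
    have "0 \<le> (\<integral>t\<in>{a..b}. norm (p t) \<partial>lborel)" unfolding set_lebesgue_integral_def
      by (rule integral_nonneg_AE) auto
    then show ?thesis using False unfolding PPt_def by simp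
  qed
  have I1i: "integrable lborel (\<lambda>x. Pt x * QQt x)"
    by (rule integrable_mult_bdd[OF PtI _ QQt_bd]) (simp add: QQt_def)
  have I2i: "integrable lborel (\<lambda>x. Qt x * PPt x)"
    by (rule integrable_mult_bdd[OF QtI _ PPt_bd]) (simp add: PPt_def)
  have "(\<integral>x\<in>{a..b}. p x * QQ x + PP x * q x \<partial>lborel) = (\<integral>x. Pt x * QQt x + Qt x * PPt x \<partial>lborel)"
    unfolding set_lebesgue_integral_def
    by (intro Bochner_Integration.integral_cong) (auto simp: Pt_def Qt_def PPt_def QQt_def indicator_def)
  also have "\<dots> = (\<integral>x. Pt x * QQt x \<partial>lborel) + (\<integral>x. Qt x * PPt x \<partial>lborel)"
    using I1i I2i by (rule Bochner_Integration.integral_add)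
  also have "(\<integral>x. Pt x * QQt x \<partial>lborel) = (\<integral>x. Pt x * (\<integral>t. indicator {..x} t *\<^sub>R Qt t \<partial>lborel) \<partial>lborel)"
  proof (intro Bochner_Integration.integral_cong refl)
    fix x show "Pt x * QQt x = Pt x * (\<integral>t. indicator {..x} t *\<^sub>R Qt t \<partial>lborel)"
    proof (cases "x \<in> {a..b}")
      case True
      have "QQ x = (\<integral>t. indicator {..x} t *\<^sub>R Qt t \<partial>lborel)"
        unfolding QQ_def set_lebesgue_integral_def Qt_def
        using True by (intro Bochner_Integration.integral_cong refl) (auto simp: indicator_def)
      then show ?thesis using True by (simp add: QQt_def)
    qed (simp add: Pt_def)
  qed
  also have "(\<integral>x. Qt x * PPt x \<partial>lborel) = (\<integral>t. (\<integral>x. indicator {..<t} x *\<^sub>R Pt x \<partial>lborel) * Qt t \<partial>lborel)"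
  proof (intro Bochner_Integration.integral_cong refl)
    fix t show "Qt t * PPt t = (\<integral>x. indicator {..<t} x *\<^sub>R Pt x \<partial>lborel) * Qt t"
    proof (cases "t \<in> {a..b}")
      case True
      have "PP t = (\<integral>x. indicator {..<t} x *\<^sub>R Pt x \<partial>lborel)"
        unfolding PP_def set_lebesgue_integral_def Pt_def
      proof (intro integral_cong_AE)
        show "AE x in lborel. indicat_real {a..t} x *\<^sub>R p x = indicat_real {..<t} x *\<^sub>R indicat_real {a..b} x *\<^sub>R p x"
          using AE_lborel_singleton[of t] by eventually_elim (use True in \<open>auto simp: indicator_def\<close>)
      qed measurable
      then show ?thesis using True by (simp add: PPt_def)
    qed (simp add: Qt_def)
  qed
  also have "\<dots> = (\<integral>x. Pt x * (\<integral>t. indicator {x<..} t *\<^sub>R Qt t \<partial>lborel) \<partial>lborel)"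
    by (rule fubini_tri[OF PtI QtI])
  also have "(\<integral>x. Pt x * (\<integral>t. indicator {..x} t *\<^sub>R Qt t \<partial>lborel) \<partial>lborel)
      + (\<integral>x. Pt x * (\<integral>t. indicator {x<..} t *\<^sub>R Qt t \<partial>lborel) \<partial>lborel)
      = (\<integral>x. Pt x * (\<integral>t. Qt t \<partial>lborel) \<partial>lborel)"
  proof -
    have sp: "(\<integral>t. indicator {..x} t *\<^sub>R Qt t \<partial>lborel) + (\<integral>t. indicator {x<..} t *\<^sub>R Qt t \<partial>lborel)
        = (\<integral>t. Qt t \<partial>lborel)" for x
    proof -
      have "(\<integral>t. indicator {..x} t *\<^sub>R Qt t \<partial>lborel) + (\<integral>t. indicator {x<..} t *\<^sub>R Qt t \<partial>lborel)
          = (\<integral>t. indicator {..x} t *\<^sub>R Qt t + indicator {x<..} t *\<^sub>R Qt t \<partial>lborel)"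
        using QtI by (intro Bochner_Integration.integral_add[symmetric] integrable_mult_indicator) auto
      also have "\<dots> = (\<integral>t. Qt t \<partial>lborel)"
        by (intro Bochner_Integration.integral_cong refl) (auto simp: indicator_def)
      finally show ?thesis .
    qed
    have i1: "integrable lborel (\<lambda>x. Pt x * (\<integral>t. indicator {..x} t *\<^sub>R Qt t \<partial>lborel))"
    proof (rule integrable_mult_bdd[OF PtI])
      show "(\<lambda>x. \<integral>t. indicator {..x} t *\<^sub>R Qt t \<partial>lborel) \<in> borel_measurable lborel"
      proof -
        have "(\<lambda>z::real\<times>real. if snd z \<le> fst z then Qt (snd z) else 0) \<in> borel_measurable (lborel \<Otimes>\<^sub>M lborel)"
          using QtI by measurable
        moreover have "(\<lambda>z::real\<times>real. if snd z \<le> fst z then Qt (snd z) else 0) = case_prod (\<lambda>x t. indicator {..x} t *\<^sub>R Qt t)"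
          by (auto simp: fun_eq_iff indicator_def)
        ultimately show ?thesis
          by (intro sigma_finite_measure.borel_measurable_lebesgue_integral[OF sigma_finite_lborel]) simp
      qed
      show "norm (\<integral>t. indicator {..x} t *\<^sub>R Qt t \<partial>lborel) \<le> (\<integral>t. norm (Qt t) \<partial>lborel)" for x
      proof -
        have "norm (\<integral>t. indicator {..x} t *\<^sub>R Qt t \<partial>lborel) \<le> (\<integral>t. norm (indicator {..x} t *\<^sub>R Qt t) \<partial>lborel)"
          by (rule integral_norm_bound)
        also have "\<dots> \<le> (\<integral>t. norm (Qt t) \<partial>lborel)"
          using QtI by (intro integral_mono integrable_norm integrable_mult_indicator) (auto simp: indicator_def)
        finally show ?thesis .
      qed
    qed
    have i2: "integrable lborel (\<lambda>x. Pt x * (\<integral>t. indicator {x<..} t *\<^sub>R Qt t \<partial>lborel))"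
    proof -
      have "(\<lambda>x. Pt x * (\<integral>t. indicator {x<..} t *\<^sub>R Qt t \<partial>lborel))
          = (\<lambda>x. Pt x * (\<integral>t. Qt t \<partial>lborel) - Pt x * (\<integral>t. indicator {..x} t *\<^sub>R Qt t \<partial>lborel))"
      proof (rule ext)
        fix x
        have "(\<integral>t. indicator {x<..} t *\<^sub>R Qt t \<partial>lborel) = (\<integral>t. Qt t \<partial>lborel) - (\<integral>t. indicator {..x} t *\<^sub>R Qt t \<partial>lborel)"
          using sp[of x] by (simp add: eq_diff_eq add.commute)
        then show "Pt x * (\<integral>t. indicator {x<..} t *\<^sub>R Qt t \<partial>lborel)
          = Pt x * (\<integral>t. Qt t \<partial>lborel) - Pt x * (\<integral>t. indicator {..x} t *\<^sub>R Qt t \<partial>lborel)"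
          by (simp add: right_diff_distrib)
      qed
      then show ?thesis using i1 PtI by simp
    qed
    show ?thesis
      using i1 i2 by (simp add: Bochner_Integration.integral_add[symmetric] distrib_left[symmetric] sp)
  qed
  also have "(\<integral>x. Pt x * (\<integral>t. Qt t \<partial>lborel) \<partial>lborel) = (\<integral>t\<in>{a..b}. p t \<partial>lborel) * (\<integral>t\<in>{a..b}. q t \<partial>lborel)"
    unfolding set_lebesgue_integral_def Pt_def Qt_def by (rule integral_mult_left_zero)
  finally show ?thesis unfolding PP_def QQ_def .
qed

lemma sq_loc:
  assumes "square_integrable f"
  shows "set_integrable lborel {a..b} f"
proof -
  have fm[measurable]: "f \<in> borel_measurable lborel" and fi: "integrable lborel (\<lambda>x. (cmod (f x))\<^sup>2)"
    using assms by (auto simp: square_integrable_def)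
  have "integrable lborel (\<lambda>x. indicat_real {a..b} x + (cmod (f x))\<^sup>2)"
    by (intro Bochner_Integration.integrable_add fi integrable_real_indicator) (auto simp: emeasure_lborel_Icc_eq)
  then show ?thesis unfolding set_integrable_def
  proof (rule Bochner_Integration.integrable_bound)
    show "(\<lambda>x. indicat_real {a..b} x *\<^sub>R f x) \<in> borel_measurable lborel" by measurable
    show "AE x in lborel. norm (indicat_real {a..b} x *\<^sub>R f x) \<le> norm (indicat_real {a..b} x + (cmod (f x))\<^sup>2)"
    proof (intro AE_I2)
      fix x
      have "cmod (f x) \<le> 1 + (cmod (f x))\<^sup>2"
      proof -
        have "0 \<le> (cmod (f x) - 1)\<^sup>2" by simp
        then have "2 * cmod (f x) \<le> 1 + cmod (f x) * cmod (f x)" by (simp add: power2_eq_square algebra_simps)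
        then show ?thesis using norm_ge_zero[of "f x"] unfolding power2_eq_square by linarith
      qed
      then show "norm (indicat_real {a..b} x *\<^sub>R f x) \<le> norm (indicat_real {a..b} x + (cmod (f x))\<^sup>2)"
        by (auto simp: indicator_def)
    qed
  qed
qed

lemma set_int_split:
  fixes g :: "real \<Rightarrow> complex"
  assumes loc: "\<And>c d. set_integrable lborel {c..d} g" and "c \<le> d" "d \<le> e"
  shows "(\<integral>t\<in>{c..e}. g t \<partial>lborel) = (\<integral>t\<in>{c..d}. g t \<partial>lborel) + (\<integral>t\<in>{d..e}. g t \<partial>lborel)"
proof -
  have "(\<integral>t\<in>{c..d}. g t \<partial>lborel) + (\<integral>t\<in>{d..e}. g t \<partial>lborel)
      = (\<integral>t. indicator {c..d} t *\<^sub>R g t + indicator {d..e} t *\<^sub>R g t \<partial>lborel)"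
    unfolding set_lebesgue_integral_def
    using loc[of c d] loc[of d e] unfolding set_integrable_def
    by (rule Bochner_Integration.integral_add[symmetric])
  also have "\<dots> = (\<integral>t\<in>{c..e}. g t \<partial>lborel)"
    unfolding set_lebesgue_integral_def
  proof (rule integral_cong_AE)
    show "AE t in lborel. indicator {c..d} t *\<^sub>R g t + indicator {d..e} t *\<^sub>R g t = indicator {c..e} t *\<^sub>R g t"
      using AE_lborel_singleton[of d] by eventually_elim (use assms in \<open>auto simp: indicator_def\<close>)
    have "(\<lambda>t. indicator {c..d} t *\<^sub>R g t) \<in> borel_measurable lborel"
         "(\<lambda>t. indicator {d..e} t *\<^sub>R g t) \<in> borel_measurable lborel"
      using loc[of c d] loc[of d e] unfolding set_integrable_def by auto
    then show "(\<lambda>t. indicator {c..d} t *\<^sub>R g t + indicator {d..e} t *\<^sub>R g t) \<in> borel_measurable lborel" by simp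
    show "(\<lambda>t. indicator {c..e} t *\<^sub>R g t) \<in> borel_measurable lborel"
      using loc[of c e] unfolding set_integrable_def by auto
  qed
  finally show ?thesis ..
qed

lemma meas_indef2:
  fixes q :: "real \<Rightarrow> complex"
  assumes [measurable]: "q \<in> borel_measurable lborel"
  shows "(\<lambda>x. \<integral>t\<in>{x..b}. q t \<partial>lborel) \<in> borel_measurable lborel"
proof -
  have "(\<lambda>z::real\<times>real. if fst z \<le> snd z \<and> snd z \<le> b then q (snd z) else 0) \<in> borel_measurable (lborel \<Otimes>\<^sub>M lborel)"
    by measurable
  moreover have "(\<lambda>z::real\<times>real. if fst z \<le> snd z \<and> snd z \<le> b then q (snd z) else 0) = case_prod (\<lambda>x t. indicator {x..b} t *\<^sub>R q t)"
    by (auto simp: fun_eq_iff indicator_def)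
  ultimately have "case_prod (\<lambda>x t. indicator {x..b} t *\<^sub>R q t) \<in> borel_measurable (lborel \<Otimes>\<^sub>M lborel)" by simp
  then show ?thesis unfolding set_lebesgue_integral_def
    by (rule sigma_finite_measure.borel_measurable_lebesgue_integral[OF sigma_finite_lborel])
qed

definition prim :: "(real \<Rightarrow> complex) \<Rightarrow> real \<Rightarrow> complex" where
  "prim g x = (if 0 \<le> x then (\<integral>t\<in>{0..x}. g t \<partial>lborel) else - (\<integral>t\<in>{x..0}. g t \<partial>lborel))"

lemma prim_meas:
  assumes [measurable]: "g \<in> borel_measurable lborel"
  shows "prim g \<in> borel_measurable lborel"
proof -
  have [measurable]: "(\<lambda>x. \<integral>t\<in>{0..x}. g t \<partial>lborel) \<in> borel_measurable lborel" by (rule meas_indef) simp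
  have [measurable]: "(\<lambda>x. \<integral>t\<in>{x..0}. g t \<partial>lborel) \<in> borel_measurable lborel" by (rule meas_indef2) simp
  show ?thesis unfolding prim_def[abs_def] by measurable
qed

lemma prim_incr:
  assumes loc: "\<And>c d. set_integrable lborel {c..d} g" and "x \<le> y"
  shows "prim g y - prim g x = (\<integral>t\<in>{x..y}. g t \<partial>lborel)"
proof -
  consider "0 \<le> x" | "x < 0" "0 \<le> y" | "y < 0" using \<open>x \<le> y\<close> by linarith
  then show ?thesis
  proof cases
    case 1
    then show ?thesis using set_int_split[OF loc, of 0 x y] \<open>x \<le> y\<close> by (simp add: prim_def)
  next
    case 2
    then show ?thesis using set_int_split[OF loc, of x 0 y] by (simp add: prim_def)
  next
    case 3
    then show ?thesis using set_int_split[OF loc, of x y 0] \<open>x \<le> y\<close> by (simp add: prim_def)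
  qed
qed

lemma cont_bound:
  fixes c :: "real \<Rightarrow> 'b::real_normed_vector"
  assumes cont: "continuous_on UNIV c" and supp: "\<And>x. x \<notin> {a..b} \<Longrightarrow> c x = 0"
  shows "\<exists>B. \<forall>x. norm (c x) \<le> B"
proof -
  have "compact (c ` {a..b})" by (rule compact_continuous_image) (auto intro: continuous_on_subset[OF cont])
  then obtain B where B: "\<forall>y\<in>c ` {a..b}. norm y \<le> B" using compact_imp_bounded bounded_iff by metis
  have "norm (c x) \<le> max B 0" for x
    using B supp[of x] by (cases "x \<in> {a..b}") (force simp: le_max_iff_disj)+
  then show ?thesis by blast
qed

lemma integrable_loc_cont_supp:
  fixes f c :: "real \<Rightarrow> complex"
  assumes loc: "set_integrable lborel {a..b} f" and cont: "continuous_on UNIV c"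
    and supp: "\<And>x. x \<notin> {a..b} \<Longrightarrow> c x = 0"
  shows "integrable lborel (\<lambda>x. f x * c x)"
proof -
  obtain B where B: "\<And>x. norm (c x) \<le> B" using cont_bound[OF cont supp] by blast
  have "integrable lborel (\<lambda>x. (indicator {a..b} x *\<^sub>R f x) * c x)"
    by (rule integrable_mult_bdd[OF loc[unfolded set_integrable_def] _ B])
      (simp add: borel_measurable_continuous_onI[OF cont])
  moreover have "(\<lambda>x. (indicator {a..b} x *\<^sub>R f x) * c x) = (\<lambda>x. f x * c x)"
    using supp by (auto simp: fun_eq_iff indicator_def)
  ultimately show ?thesis by simp
qed

lemma test_fun_facts:
  assumes "test_fun \<phi>"
  shows "\<And>x. (\<phi> has_real_derivative deriv \<phi> x) (at x)"
    and "continuous_on UNIV \<phi>"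
    and "continuous_on UNIV (deriv \<phi>)"
    and "\<exists>R\<ge>0. \<forall>x. R < \<bar>x\<bar> \<longrightarrow> \<phi> x = 0 \<and> deriv \<phi> x = 0"
proof -
  have T: "\<And>n x. ((deriv ^^ n) \<phi> has_real_derivative (deriv ^^ Suc n) \<phi> x) (at x)"
    using assms unfolding test_fun_def by blast
  have d0: "\<And>x. (\<phi> has_real_derivative deriv \<phi> x) (at x)"
    using T[of 0] by simp
  then show "\<And>x. (\<phi> has_real_derivative deriv \<phi> x) (at x)" .
  show "continuous_on UNIV \<phi>" using d0 by (meson DERIV_isCont continuous_at_imp_continuous_on)
  have d1: "\<And>x. (deriv \<phi> has_real_derivative (deriv ^^ 2) \<phi> x) (at x)"
    using T[of 1] by (simp add: numeral_2_eq_2)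
  show "continuous_on UNIV (deriv \<phi>)" using d1 by (meson DERIV_isCont continuous_at_imp_continuous_on)
  have "bounded {x. \<phi> x \<noteq> 0}" using assms unfolding test_fun_def by (simp add: compact_closure)
  then obtain R where R: "\<And>x. \<phi> x \<noteq> 0 \<Longrightarrow> \<bar>x\<bar> \<le> R" unfolding bounded_real by blast
  have "\<forall>x. \<bar>R\<bar> < \<bar>x\<bar> \<longrightarrow> \<phi> x = 0 \<and> deriv \<phi> x = 0"
  proof (intro allI impI)
    fix x assume x: "\<bar>R\<bar> < \<bar>x\<bar>"
    have z: "\<phi> y = 0" if "y \<in> {y. \<bar>R\<bar> < \<bar>y\<bar>}" for y using R[of y] that by force
    have op: "open {y::real. \<bar>R\<bar> < \<bar>y\<bar>}" by (intro open_Collect_less continuous_intros)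
    have "((\<lambda>y. 0) has_real_derivative 0) (at x)" by simp
    then have "(\<phi> has_real_derivative 0) (at x)"
      by (rule has_field_derivative_transform_within_open[OF _ op]) (use x z in auto)
    then have "deriv \<phi> x = 0" by (rule DERIV_imp_deriv)
    then show "\<phi> x = 0 \<and> deriv \<phi> x = 0" using z x by auto
  qed
  then show "\<exists>R\<ge>0. \<forall>x. R < \<bar>x\<bar> \<longrightarrow> \<phi> x = 0 \<and> deriv \<phi> x = 0" by (intro exI[of _ "\<bar>R\<bar>"]) auto
qed

lemma prim_weak:
  fixes g :: "real \<Rightarrow> complex"
  assumes gm[measurable]: "g \<in> borel_measurable lborel"
    and gl: "\<And>c d. set_integrable lborel {c..d} g" and tf: "test_fun \<phi>"
  shows "(\<integral>x. prim g x * complex_of_real (deriv \<phi> x) \<partial>lborel) = - (\<integral>x. g x * complex_of_real (\<phi> x) \<partial>lborel)"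
proof -
  note F = test_fun_facts[OF tf]
  obtain R where R0: "R \<ge> 0" and R: "\<And>x. R < \<bar>x\<bar> \<Longrightarrow> \<phi> x = 0 \<and> deriv \<phi> x = 0" using F(4) by blast
  define a where "a = -R-1"
  define b where "b = R+1"
  have ab: "a \<le> b" using R0 by (simp add: a_def b_def)
  have out: "\<phi> x = 0" "deriv \<phi> x = 0" if "x \<notin> {a..b}" for x
    using R[of x] that by (auto simp: a_def b_def)
  have \<phi>ab: "\<phi> a = 0" "\<phi> b = 0" using R[of a] R[of b] R0 by (auto simp: a_def b_def)
  define ph where "ph x = complex_of_real (\<phi> x)" for x
  define dph where "dph x = complex_of_real (deriv \<phi> x)" for x
  have cph: "continuous_on UNIV ph" unfolding ph_def by (intro continuous_on_of_real F(2))
  have cdph: "continuous_on UNIV dph" unfolding dph_def by (intro continuous_on_of_real F(3))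
  have dphm[measurable]: "dph \<in> borel_measurable lborel" by (simp add: borel_measurable_continuous_onI[OF cdph])
  have dphl: "set_integrable lborel {c..d} dph" for c d
    unfolding set_integrable_def by (rule borel_integrable_compact) (auto intro: continuous_on_subset[OF cdph])
  have dphI: "integrable lborel dph"
    by (rule integrable_cont_supp[where A=a and B=b]) (use cdph out in \<open>auto simp: dph_def\<close>)
  have ftc: "(\<integral>t\<in>{a..x}. dph t \<partial>lborel) = ph x" if "a \<le> x" for x
  proof -
    have "(LBINT t. indicator {a..x} t *\<^sub>R dph t) = ph x - ph a"
    proof (rule integral_FTC_atLeastAtMost[OF that])
      fix t show "(ph has_vector_derivative dph t) (at t within {a..x})"
        unfolding ph_def dph_def
        by (rule has_vector_derivative_of_real, rule has_field_derivative_at_within[OF F(1)])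
      show "continuous_on {a..x} dph" using cdph continuous_on_subset by blast
    qed
    then show ?thesis using \<phi>ab by (simp add: set_lebesgue_integral_def ph_def)
  qed
  have main: "(\<integral>x\<in>{a..b}. g x * (\<integral>t\<in>{a..x}. dph t \<partial>lborel) + (\<integral>t\<in>{a..x}. g t \<partial>lborel) * dph x \<partial>lborel)
      = (\<integral>t\<in>{a..b}. g t \<partial>lborel) * (\<integral>t\<in>{a..b}. dph t \<partial>lborel)"
    by (rule prod_ftc[OF ab gm dphm gl dphl])
  also have "(\<integral>t\<in>{a..b}. dph t \<partial>lborel) = 0" using ftc[OF ab] \<phi>ab by (simp add: ph_def)
  finally have main0: "(\<integral>x\<in>{a..b}. g x * (\<integral>t\<in>{a..x}. dph t \<partial>lborel) + (\<integral>t\<in>{a..x}. g t \<partial>lborel) * dph x \<partial>lborel) = 0"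
    by simp
  have eq: "indicator {a..b} x *\<^sub>R (g x * (\<integral>t\<in>{a..x}. dph t \<partial>lborel) + (\<integral>t\<in>{a..x}. g t \<partial>lborel) * dph x)
      = g x * ph x + prim g x * dph x - prim g a * dph x" for x
  proof (cases "x \<in> {a..b}")
    case True
    then have "(\<integral>t\<in>{a..x}. g t \<partial>lborel) = prim g x - prim g a" using prim_incr[OF gl, of a x] by simp
    then show ?thesis using True ftc[of x] by (simp add: algebra_simps) (metis distrib_left)
  next
    case False
    then show ?thesis using out[OF False] by (simp add: ph_def dph_def)
  qed
  have I1: "integrable lborel (\<lambda>x. g x * ph x)"
    by (rule integrable_loc_cont_supp[OF gl cph]) (use out in \<open>auto simp: ph_def\<close>)
  have I2: "integrable lborel (\<lambda>x. prim g x * dph x)"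
  proof -
    define pr where "pr x = indicator {a..b} x *\<^sub>R prim g x" for x
    have prm: "pr \<in> borel_measurable lborel" unfolding pr_def using prim_meas[OF gm] by measurable
    have "norm (pr x) \<le> norm (prim g a) + (\<integral>t\<in>{a..b}. norm (g t) \<partial>lborel)" for x
    proof (cases "x \<in> {a..b}")
      case True
      then have "prim g x = prim g a + (\<integral>t\<in>{a..x}. g t \<partial>lborel)" using prim_incr[OF gl, of a x] by (simp add: algebra_simps)
      then have "norm (prim g x) \<le> norm (prim g a) + norm (\<integral>t\<in>{a..x}. g t \<partial>lborel)" by (simp add: norm_triangle_ineq)
      also have "\<dots> \<le> norm (prim g a) + (\<integral>t\<in>{a..b}. norm (g t) \<partial>lborel)"
        using indef_bound[OF gl, of x b a] True by simp
      finally show ?thesis using True by (simp add: pr_def)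
    next
      case False
      have "0 \<le> (\<integral>t\<in>{a..b}. norm (g t) \<partial>lborel)" unfolding set_lebesgue_integral_def
        by (rule integral_nonneg_AE) auto
      then show ?thesis using False by (simp add: pr_def)
    qed
    then have "integrable lborel (\<lambda>x. dph x * pr x)" by (rule integrable_mult_bdd[OF dphI prm])
    moreover have "(\<lambda>x. dph x * pr x) = (\<lambda>x. prim g x * dph x)"
      using out by (auto simp: fun_eq_iff pr_def dph_def indicator_def)
    ultimately show ?thesis by simp
  qed
  have I3: "integrable lborel (\<lambda>x. prim g a * dph x)" using dphI by simp
  have "0 = (\<integral>x. g x * ph x + prim g x * dph x - prim g a * dph x \<partial>lborel)"
  proof -
    have e2: "(\<lambda>x. indicator {a..b} x *\<^sub>R (g x * (\<integral>t\<in>{a..x}. dph t \<partial>lborel) + (\<integral>t\<in>{a..x}. g t \<partial>lborel) * dph x))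
      = (\<lambda>x. g x * ph x + prim g x * dph x - prim g a * dph x)" by (rule ext) (rule eq)
    show ?thesis using main0 unfolding set_lebesgue_integral_def[where A="{a..b}"] e2 by simp
  qed
  also have "\<dots> = (\<integral>x. g x * ph x \<partial>lborel) + (\<integral>x. prim g x * dph x \<partial>lborel) - prim g a * (\<integral>x. dph x \<partial>lborel)"
    using I1 I2 I3 by (simp add: Bochner_Integration.integral_diff Bochner_Integration.integral_add)
  also have "(\<integral>x. dph x \<partial>lborel) = (\<integral>t\<in>{a..b}. dph t \<partial>lborel)"
    unfolding set_lebesgue_integral_def
    by (intro Bochner_Integration.integral_cong refl) (use out in \<open>auto simp: dph_def indicator_def\<close>)
  also have "\<dots> = 0" using ftc[OF ab] \<phi>ab by (simp add: ph_def)
  finally show ?thesis by (simp add: ph_def dph_def eq_neg_iff_add_eq_0 add.commute)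
qed

lemma prim_loc:
  fixes g :: "real \<Rightarrow> complex"
  assumes gm[measurable]: "g \<in> borel_measurable lborel"
    and gl: "\<And>c d. set_integrable lborel {c..d} g"
  shows "set_integrable lborel {a..b} (prim g)"
proof -
  have pm[measurable]: "prim g \<in> borel_measurable lborel" by (rule prim_meas[OF gm])
  define C where "C = norm (prim g a) + (\<integral>t\<in>{a..b}. norm (g t) \<partial>lborel)"
  have B: "norm (indicator {a..b} x *\<^sub>R prim g x) \<le> C * indicator {a..b} x" for x
  proof (cases "x \<in> {a..b}")
    case True
    then have "prim g x = prim g a + (\<integral>t\<in>{a..x}. g t \<partial>lborel)" using prim_incr[OF gl, of a x] by (simp add: algebra_simps)
    then have "norm (prim g x) \<le> norm (prim g a) + norm (\<integral>t\<in>{a..x}. g t \<partial>lborel)" by (simp add: norm_triangle_ineq)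
    also have "\<dots> \<le> C"
      using indef_bound[OF gl, of x b a] True by (simp add: C_def)
    finally show ?thesis using True by simp
  qed simp
  have I: "integrable lborel (\<lambda>x. C * indicat_real {a..b} x)"
    by (intro integrable_mult_right integrable_real_indicator) (auto simp: emeasure_lborel_Icc_eq)
  show ?thesis unfolding set_integrable_def
  proof (rule Bochner_Integration.integrable_bound[OF I])
    show "(\<lambda>x. indicat_real {a..b} x *\<^sub>R prim g x) \<in> borel_measurable lborel" by measurable
    show "AE x in lborel. norm (indicat_real {a..b} x *\<^sub>R prim g x) \<le> norm (C * indicat_real {a..b} x)"
      by (intro AE_I2 order_trans[OF B]) simp
  qed
qed

lemma reg:
  assumes "H1_weak h g"
  shows "\<exists>K. (AE x in lborel. h x = K x) \<and> K \<in> borel_measurable lborel \<and>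
    (\<forall>x y. x \<le> y \<longrightarrow> K y - K x = (\<integral>t\<in>{x..y}. g t \<partial>lborel))"
proof -
  have hm[measurable]: "h \<in> borel_measurable lborel" and gm[measurable]: "g \<in> borel_measurable lborel"
    using assms by (auto simp: H1_weak_def square_integrable_def)
  have hl: "\<And>c d. set_integrable lborel {c..d} h" and gl: "\<And>c d. set_integrable lborel {c..d} g"
    using assms sq_loc by (auto simp: H1_weak_def)
  have pm[measurable]: "prim g \<in> borel_measurable lborel" by (rule prim_meas[OF gm])
  define u where "u x = h x - prim g x" for x
  have "AE x in lborel. u x = (\<integral>x\<in>{0<..<1}. u x \<partial>lborel)"
  proof (rule dbr)
    show "u \<in> borel_measurable lborel" unfolding u_def by measurable
    show "set_integrable lborel {a..b} u" for a b
      using hl[of a b] prim_loc[OF gm gl, of a b] unfolding u_def set_integrable_def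
      by (simp add: scaleR_diff_right Bochner_Integration.integrable_diff)
    fix \<phi> assume tf: "test_fun \<phi>"
    note F = test_fun_facts[OF tf]
    obtain R where R: "\<And>x. R < \<bar>x\<bar> \<Longrightarrow> \<phi> x = 0 \<and> deriv \<phi> x = 0" using F(4) by blast
    have cd: "continuous_on UNIV (\<lambda>x. complex_of_real (deriv \<phi> x))" by (intro continuous_on_of_real F(3))
    have sd: "complex_of_real (deriv \<phi> x) = 0" if "x \<notin> {-R..R}" for x using R[of x] that by auto
    have i1: "integrable lborel (\<lambda>x. h x * complex_of_real (deriv \<phi> x))"
      by (rule integrable_loc_cont_supp[OF hl cd sd])
    have i2: "integrable lborel (\<lambda>x. prim g x * complex_of_real (deriv \<phi> x))"
      by (rule integrable_loc_cont_supp[OF prim_loc[OF gm gl] cd sd])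
    have "(\<integral>x. u x * complex_of_real (deriv \<phi> x) \<partial>lborel)
        = (\<integral>x. h x * complex_of_real (deriv \<phi> x) \<partial>lborel) - (\<integral>x. prim g x * complex_of_real (deriv \<phi> x) \<partial>lborel)"
      unfolding u_def using i1 i2 by (simp add: left_diff_distrib Bochner_Integration.integral_diff)
    also have "\<dots> = 0"
      using prim_weak[OF gm gl tf] assms tf by (simp add: H1_weak_def)
    finally show "(\<integral>x. u x * complex_of_real (deriv \<phi> x) \<partial>lborel) = 0" .
  qed
  then obtain c where c: "AE x in lborel. u x = c" by blast
  define K where "K x = prim g x + c" for x
  have "AE x in lborel. h x = K x" using c by eventually_elim (simp add: u_def K_def algebra_simps)
  moreover have "K \<in> borel_measurable lborel" unfolding K_def by measurable
  moreover have "\<forall>x y. x \<le> y \<longrightarrow> K y - K x = (\<integral>t\<in>{x..y}. g t \<partial>lborel)"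
    using prim_incr[OF gl] by (simp add: K_def)
  ultimately show ?thesis by blast
qed

lemma L2_prod:
  fixes f k :: "real \<Rightarrow> complex"
  assumes [measurable]: "f \<in> borel_measurable lborel" "k \<in> borel_measurable lborel"
    and fi: "integrable lborel (\<lambda>x. (cmod (f x))\<^sup>2)" and ki: "integrable lborel (\<lambda>x. (cmod (k x))\<^sup>2)"
  shows "integrable lborel (\<lambda>x. f x * k x)"
proof (rule Bochner_Integration.integrable_bound[where f="\<lambda>x. (cmod (f x))\<^sup>2 + (cmod (k x))\<^sup>2"])
  show "integrable lborel (\<lambda>x. (cmod (f x))\<^sup>2 + (cmod (k x))\<^sup>2)" using fi ki by simp
  show "(\<lambda>x. f x * k x) \<in> borel_measurable lborel" by measurable
  show "AE x in lborel. norm (f x * k x) \<le> norm ((cmod (f x))\<^sup>2 + (cmod (k x))\<^sup>2)"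
  proof (intro AE_I2)
    fix x
    have "0 \<le> (cmod (f x) - cmod (k x))\<^sup>2" by simp
    then have "2 * (cmod (f x) * cmod (k x)) \<le> (cmod (f x))\<^sup>2 + (cmod (k x))\<^sup>2"
      by (simp add: power2_eq_square algebra_simps)
    moreover have "0 \<le> cmod (f x) * cmod (k x)" by simp
    ultimately have "cmod (f x) * cmod (k x) \<le> (cmod (f x))\<^sup>2 + (cmod (k x))\<^sup>2" by linarith
    then show "norm (f x * k x) \<le> norm ((cmod (f x))\<^sup>2 + (cmod (k x))\<^sup>2)"
      by (simp add: norm_mult)
  qed
qed

lemma tail_bound:
  fixes K :: "real \<Rightarrow> complex"
  assumes Ki: "integrable lborel (\<lambda>x. (cmod (K x))\<^sup>2)" and N: "0 \<le> N"
    and c: "\<And>x. x \<in> {A..A+N} \<Longrightarrow> c \<le> (cmod (K x))\<^sup>2" and c0: "0 \<le> c"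
  shows "c * N \<le> (\<integral>x. (cmod (K x))\<^sup>2 \<partial>lborel)"
proof -
  have "(\<integral>x. c * indicator {A..A+N} x \<partial>lborel) \<le> (\<integral>x. (cmod (K x))\<^sup>2 \<partial>lborel)"
  proof (rule integral_mono)
    show "integrable lborel (\<lambda>x. c * indicat_real {A..A + N} x)"
      by (intro integrable_mult_right integrable_real_indicator) (auto simp: emeasure_lborel_Icc_eq)
    show "c * indicat_real {A..A + N} x \<le> (cmod (K x))\<^sup>2" for x
      using c[of x] by (auto simp: indicator_def)
  qed (fact Ki)
  moreover have "(\<integral>x. c * indicator {A..A+N} x \<partial>lborel) = c * N"
    using N by (simp add: measure_lborel_Icc mult.commute)
  ultimately show ?thesis using N by simp
qed

lemma vanish_top:
  fixes K :: "real \<Rightarrow> complex"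
  assumes Ki: "integrable lborel (\<lambda>x. (cmod (K x))\<^sup>2)" and lim: "((\<lambda>x. (K x)\<^sup>2) \<longlongrightarrow> L) at_top"
  shows "L = 0"
proof (rule ccontr)
  assume L: "L \<noteq> 0"
  define c where "c = cmod L / 2"
  have c0: "0 < c" using L by (simp add: c_def)
  have "((\<lambda>x. cmod ((K x)\<^sup>2)) \<longlongrightarrow> cmod L) at_top" by (intro tendsto_norm lim)
  then have "eventually (\<lambda>x. c < cmod ((K x)\<^sup>2)) at_top"
    by (rule order_tendstoD) (use L in \<open>simp add: c_def\<close>)
  then obtain X where X: "\<And>x. X \<le> x \<Longrightarrow> c < cmod ((K x)\<^sup>2)" by (auto simp: eventually_at_top_linorder)
  define I where "I = (\<integral>x. (cmod (K x))\<^sup>2 \<partial>lborel)"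
  define N where "N = I / c + 1"
  have I0: "0 \<le> I" unfolding I_def by (rule integral_nonneg_AE) auto
  then have N0: "0 \<le> N" using c0 by (simp add: N_def)
  have "c * N \<le> I" unfolding I_def
    by (rule tail_bound[OF Ki N0, of X]) (use X c0 in \<open>auto simp: norm_power less_imp_le\<close>)
  moreover have "c * N = I + c" using c0 by (simp add: N_def field_simps)
  ultimately show False using c0 by simp
qed

lemma vanish_bot:
  fixes K :: "real \<Rightarrow> complex"
  assumes Ki: "integrable lborel (\<lambda>x. (cmod (K x))\<^sup>2)" and lim: "((\<lambda>x. (K x)\<^sup>2) \<longlongrightarrow> L) at_bot"
  shows "L = 0"
proof (rule ccontr)
  assume L: "L \<noteq> 0"
  define c where "c = cmod L / 2"
  have c0: "0 < c" using L by (simp add: c_def)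
  have "((\<lambda>x. cmod ((K x)\<^sup>2)) \<longlongrightarrow> cmod L) at_bot" by (intro tendsto_norm lim)
  then have "eventually (\<lambda>x. c < cmod ((K x)\<^sup>2)) at_bot"
    by (rule order_tendstoD) (use L in \<open>simp add: c_def\<close>)
  then obtain X where X: "\<And>x. x \<le> X \<Longrightarrow> c < cmod ((K x)\<^sup>2)" by (auto simp: eventually_at_bot_linorder)
  define I where "I = (\<integral>x. (cmod (K x))\<^sup>2 \<partial>lborel)"
  define N where "N = I / c + 1"
  have I0: "0 \<le> I" unfolding I_def by (rule integral_nonneg_AE) auto
  then have N0: "0 \<le> N" using c0 by (simp add: N_def)
  have "c * N \<le> I" unfolding I_def
    by (rule tail_bound[OF Ki N0, of "X - N"]) (use X c0 in \<open>auto simp: norm_power less_imp_le\<close>)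
  moreover have "c * N = I + c" using c0 by (simp add: N_def field_simps)
  ultimately show False using c0 by simp
qed

lemma set_integrable_of_integrable:
  fixes f :: "real \<Rightarrow> complex"
  assumes "integrable lborel f" "A \<in> sets lborel"
  shows "set_integrable lborel A f"
  unfolding set_integrable_def using assms by (rule integrable_mult_indicator[rotated])

lemma F1:
  fixes K g :: "real \<Rightarrow> complex"
  assumes Km[measurable]: "K \<in> borel_measurable lborel" and gm[measurable]: "g \<in> borel_measurable lborel"
    and gl: "\<And>c d. set_integrable lborel {c..d} g" and gKI: "integrable lborel (\<lambda>x. g x * K x)"
    and Kinc: "\<And>x y. x \<le> y \<Longrightarrow> K y - K x = (\<integral>t\<in>{x..y}. g t \<partial>lborel)"
    and ab: "a \<le> b"
  shows "(\<integral>x\<in>{a..b}. 2 * g x * K x \<partial>lborel) = (K b)\<^sup>2 - (K a)\<^sup>2"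
proof -
  have "(\<integral>x\<in>{a..b}. g x * (\<integral>t\<in>{a..x}. g t \<partial>lborel) + (\<integral>t\<in>{a..x}. g t \<partial>lborel) * g x \<partial>lborel)
      = (\<integral>t\<in>{a..b}. g t \<partial>lborel) * (\<integral>t\<in>{a..b}. g t \<partial>lborel)"
    by (rule prod_ftc[OF ab gm gm gl gl])
  also have "(\<integral>x\<in>{a..b}. g x * (\<integral>t\<in>{a..x}. g t \<partial>lborel) + (\<integral>t\<in>{a..x}. g t \<partial>lborel) * g x \<partial>lborel)
      = (\<integral>x\<in>{a..b}. 2 * g x * K x - 2 * K a * g x \<partial>lborel)"
    by (rule set_lebesgue_integral_cong) (auto simp: Kinc[symmetric] algebra_simps)
  also have "\<dots> = (\<integral>x\<in>{a..b}. 2 * g x * K x \<partial>lborel) - 2 * K a * (\<integral>x\<in>{a..b}. g x \<partial>lborel)"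
  proof -
    have "set_integrable lborel {a..b} (\<lambda>x. 2 * g x * K x)"
      using gKI by (intro set_integrable_of_integrable) (auto simp: mult.assoc)
    moreover have "set_integrable lborel {a..b} (\<lambda>x. 2 * K a * g x)"
      using gl[of a b] by (simp add: set_integrable_mult_right)
    ultimately show ?thesis by simp
  qed
  finally show ?thesis using Kinc[OF ab, symmetric] by (simp add: power2_eq_square algebra_simps)
qed

lemma F2:
  fixes K g F F' :: "real \<Rightarrow> complex"
  assumes Km[measurable]: "K \<in> borel_measurable lborel" and gm[measurable]: "g \<in> borel_measurable lborel"
    and gl: "\<And>c d. set_integrable lborel {c..d} g" and gKI: "integrable lborel (\<lambda>x. g x * K x)"
    and KKI: "integrable lborel (\<lambda>x. (K x)\<^sup>2)"
    and Kinc: "\<And>x y. x \<le> y \<Longrightarrow> K y - K x = (\<integral>t\<in>{x..y}. g t \<partial>lborel)"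
    and Fd: "\<And>x. (F has_vector_derivative F' x) (at x)" and F'c: "continuous_on UNIV F'"
    and Fb: "\<And>x. norm (F x) \<le> B" and F'b: "\<And>x. norm (F' x) \<le> B"
    and ab: "a \<le> b"
  shows "(\<integral>x\<in>{a..b}. 2 * g x * K x * F x + (K x)\<^sup>2 * F' x \<partial>lborel) = (K b)\<^sup>2 * F b - (K a)\<^sup>2 * F a"
proof -
  have Fc: "continuous_on UNIV F"
    using Fd by (meson continuous_at_imp_continuous_on has_vector_derivative_continuous)
  have Fm[measurable]: "F \<in> borel_measurable lborel" by (simp add: borel_measurable_continuous_onI[OF Fc])
  have F'm[measurable]: "F' \<in> borel_measurable lborel" by (simp add: borel_measurable_continuous_onI[OF F'c])
  define p where "p x = 2 * g x * K x" for x
  have pm[measurable]: "p \<in> borel_measurable lborel" unfolding p_def by measurable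
  have pI: "integrable lborel p" unfolding p_def using gKI by (simp add: mult.assoc)
  have pl: "set_integrable lborel {c..d} p" for c d by (rule set_integrable_of_integrable[OF pI]) simp
  have F'l: "set_integrable lborel {c..d} F'" for c d
    unfolding set_integrable_def by (rule borel_integrable_compact) (auto intro: continuous_on_subset[OF F'c])
  have ftc: "(\<integral>t\<in>{a..x}. F' t \<partial>lborel) = F x - F a" if "a \<le> x" for x
  proof -
    have "(LBINT t. indicator {a..x} t *\<^sub>R F' t) = F x - F a"
    proof (rule integral_FTC_atLeastAtMost[OF that])
      fix t show "(F has_vector_derivative F' t) (at t within {a..x})"
        by (rule has_vector_derivative_at_within[OF Fd])
      show "continuous_on {a..x} F'" using F'c continuous_on_subset by blast
    qed
    then show ?thesis by (simp add: set_lebesgue_integral_def)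
  qed
  have ip: "(\<integral>t\<in>{a..x}. p t \<partial>lborel) = (K x)\<^sup>2 - (K a)\<^sup>2" if "a \<le> x" for x
    unfolding p_def by (rule F1[OF Km gm gl gKI Kinc that])
  have "(\<integral>x\<in>{a..b}. p x * (\<integral>t\<in>{a..x}. F' t \<partial>lborel) + (\<integral>t\<in>{a..x}. p t \<partial>lborel) * F' x \<partial>lborel)
      = (\<integral>t\<in>{a..b}. p t \<partial>lborel) * (\<integral>t\<in>{a..b}. F' t \<partial>lborel)"
    by (rule prod_ftc[OF ab pm F'm pl F'l])
  also have "(\<integral>x\<in>{a..b}. p x * (\<integral>t\<in>{a..x}. F' t \<partial>lborel) + (\<integral>t\<in>{a..x}. p t \<partial>lborel) * F' x \<partial>lborel)
      = (\<integral>x\<in>{a..b}. (2 * g x * K x * F x + (K x)\<^sup>2 * F' x) - F a * p x - (K a)\<^sup>2 * F' x \<partial>lborel)"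
  proof (rule set_lebesgue_integral_cong)
    show "\<forall>x. x \<in> {a..b} \<longrightarrow> p x * (\<integral>t\<in>{a..x}. F' t \<partial>lborel) + (\<integral>t\<in>{a..x}. p t \<partial>lborel) * F' x
        = (2 * g x * K x * F x + (K x)\<^sup>2 * F' x) - F a * p x - (K a)\<^sup>2 * F' x"
    proof (intro allI impI)
      fix x assume "x \<in> {a..b}"
      then have ax: "a \<le> x" by simp
      show "p x * (\<integral>t\<in>{a..x}. F' t \<partial>lborel) + (\<integral>t\<in>{a..x}. p t \<partial>lborel) * F' x
        = (2 * g x * K x * F x + (K x)\<^sup>2 * F' x) - F a * p x - (K a)\<^sup>2 * F' x"
        unfolding ftc[OF ax] ip[OF ax] by (simp add: p_def algebra_simps)
    qed
  qed simp
  also have "\<dots> = (\<integral>x\<in>{a..b}. 2 * g x * K x * F x + (K x)\<^sup>2 * F' x \<partial>lborel)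
      - F a * (\<integral>x\<in>{a..b}. p x \<partial>lborel) - (K a)\<^sup>2 * (\<integral>x\<in>{a..b}. F' x \<partial>lborel)"
  proof -
    have i1: "integrable lborel (\<lambda>x. (g x * K x) * (2 * F x))"
      by (rule integrable_mult_bdd[OF gKI _, of _ "2 * B"]) (use Fb in \<open>auto simp: norm_mult\<close>)
    have i2: "integrable lborel (\<lambda>x. (K x)\<^sup>2 * F' x)"
      by (rule integrable_mult_bdd[OF KKI _ F'b]) simp
    have "integrable lborel (\<lambda>x. 2 * g x * K x * F x + (K x)\<^sup>2 * F' x)"
      using i1 i2 by (simp add: algebra_simps)
    then have s1: "set_integrable lborel {a..b} (\<lambda>x. 2 * g x * K x * F x + (K x)\<^sup>2 * F' x)"
      by (rule set_integrable_of_integrable) simp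
    have s2: "set_integrable lborel {a..b} (\<lambda>x. F a * p x)" using pl[of a b] by (simp add: set_integrable_mult_right)
    have s3: "set_integrable lborel {a..b} (\<lambda>x. (K a)\<^sup>2 * F' x)" using F'l[of a b] by (simp add: set_integrable_mult_right)
    show ?thesis using s1 s2 s3 by simp
  qed
  finally have E: "(\<integral>t\<in>{a..b}. p t \<partial>lborel) * (\<integral>t\<in>{a..b}. F' t \<partial>lborel)
    = (\<integral>x\<in>{a..b}. 2 * g x * K x * F x + (K x)\<^sup>2 * F' x \<partial>lborel) - F a * (\<integral>x\<in>{a..b}. p x \<partial>lborel)
      - (K a)\<^sup>2 * (\<integral>x\<in>{a..b}. F' x \<partial>lborel)" by (rule sym)
  have alg: "\<And>I Ip IF fa ka :: complex. Ip * IF = I - fa * Ip - ka * IF \<Longrightarrow> I = Ip * IF + fa * Ip + ka * IF"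
    by (simp add: algebra_simps)
  have "(\<integral>x\<in>{a..b}. 2 * g x * K x * F x + (K x)\<^sup>2 * F' x \<partial>lborel)
      = ((K b)\<^sup>2 - (K a)\<^sup>2) * (F b - F a) + F a * ((K b)\<^sup>2 - (K a)\<^sup>2) + (K a)\<^sup>2 * (F b - F a)"
    using alg[OF E] unfolding ip[OF ab] ftc[OF ab] .
  then show ?thesis by (simp add: algebra_simps)
qed

lemma key:
  fixes K g F F' :: "real \<Rightarrow> complex"
  assumes Km[measurable]: "K \<in> borel_measurable lborel" and Ksq: "integrable lborel (\<lambda>x. (cmod (K x))\<^sup>2)"
    and gm[measurable]: "g \<in> borel_measurable lborel" and gsq: "integrable lborel (\<lambda>x. (cmod (g x))\<^sup>2)"
    and Kinc: "\<And>x y. x \<le> y \<Longrightarrow> K y - K x = (\<integral>t\<in>{x..y}. g t \<partial>lborel)"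
    and Fd: "\<And>x. (F has_vector_derivative F' x) (at x)" and F'c: "continuous_on UNIV F'"
    and Fb: "\<And>x. norm (F x) \<le> B" and F'b: "\<And>x. norm (F' x) \<le> B"
  shows "integrable lborel (\<lambda>x. 2 * g x * K x * F x + (K x)\<^sup>2 * F' x)"
    and "(\<integral>x. 2 * g x * K x * F x + (K x)\<^sup>2 * F' x \<partial>lborel) = 0"
proof -
  have gl: "\<And>c d. set_integrable lborel {c..d} g"
    using gm gsq by (intro sq_loc) (simp add: square_integrable_def)
  have gKI: "integrable lborel (\<lambda>x. g x * K x)" by (rule L2_prod[OF gm Km gsq Ksq])
  have KKI: "integrable lborel (\<lambda>x. (K x)\<^sup>2)" using L2_prod[OF Km Km Ksq Ksq] by (simp add: power2_eq_square)
  have Fc: "continuous_on UNIV F"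
    using Fd by (meson continuous_at_imp_continuous_on has_vector_derivative_continuous)
  have Fm[measurable]: "F \<in> borel_measurable lborel" by (simp add: borel_measurable_continuous_onI[OF Fc])
  have F'm[measurable]: "F' \<in> borel_measurable lborel" by (simp add: borel_measurable_continuous_onI[OF F'c])
  define G where "G x = 2 * g x * K x * F x + (K x)\<^sup>2 * F' x" for x
  have GI: "integrable lborel G"
  proof -
    have i1: "integrable lborel (\<lambda>x. (g x * K x) * (2 * F x))"
      by (rule integrable_mult_bdd[OF gKI _, of _ "2 * B"]) (use Fb in \<open>auto simp: norm_mult\<close>)
    have i2: "integrable lborel (\<lambda>x. (K x)\<^sup>2 * F' x)"
      by (rule integrable_mult_bdd[OF KKI _ F'b]) simp
    show ?thesis unfolding G_def using i1 i2 by (simp add: algebra_simps)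
  qed
  then show "integrable lborel (\<lambda>x. 2 * g x * K x * F x + (K x)\<^sup>2 * F' x)" by (simp add: G_def[abs_def])
  define p where "p x = 2 * g x * K x" for x
  have pI: "integrable lborel p" unfolding p_def using gKI by (simp add: mult.assoc)
  have F1': "(\<integral>t\<in>{a..b}. p t \<partial>lborel) = (K b)\<^sup>2 - (K a)\<^sup>2" if "a \<le> b" for a b
    unfolding p_def by (rule F1[OF Km gm gl gKI Kinc that])
  have top: "((\<lambda>x. (K x)\<^sup>2) \<longlongrightarrow> 0) at_top"
  proof -
    have "((\<lambda>x. \<integral>t\<in>{0..x}. p t \<partial>lborel) \<longlongrightarrow> (\<integral>t\<in>{0..}. p t \<partial>lborel)) at_top"
      by (rule tendsto_set_lebesgue_integral_at_top) (auto intro: set_integrable_of_integrable[OF pI])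
    then have L: "((\<lambda>x. (K 0)\<^sup>2 + (\<integral>t\<in>{0..x}. p t \<partial>lborel)) \<longlongrightarrow> (K 0)\<^sup>2 + (\<integral>t\<in>{0..}. p t \<partial>lborel)) at_top"
      by (intro tendsto_add tendsto_const)
    have "((\<lambda>x. (K x)\<^sup>2) \<longlongrightarrow> (K 0)\<^sup>2 + (\<integral>t\<in>{0..}. p t \<partial>lborel)) at_top"
    proof (rule Lim_transform_eventually[OF L])
      show "\<forall>\<^sub>F x in at_top. (K 0)\<^sup>2 + (\<integral>t\<in>{0..x}. p t \<partial>lborel) = (K x)\<^sup>2"
        using eventually_ge_at_top[of "0::real"] by eventually_elim (simp add: F1')
    qed
    moreover from this have "(K 0)\<^sup>2 + (\<integral>t\<in>{0..}. p t \<partial>lborel) = 0" by (rule vanish_top[OF Ksq])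
    ultimately show ?thesis by simp
  qed
  have bot: "((\<lambda>x. (K x)\<^sup>2) \<longlongrightarrow> 0) at_bot"
  proof -
    have "((\<lambda>x. \<integral>t\<in>{x..0}. p t \<partial>lborel) \<longlongrightarrow> (\<integral>t\<in>{..0}. p t \<partial>lborel)) at_bot"
      by (rule tendsto_set_lebesgue_integral_at_bot) (auto intro: set_integrable_of_integrable[OF pI])
    then have L: "((\<lambda>x. (K 0)\<^sup>2 - (\<integral>t\<in>{x..0}. p t \<partial>lborel)) \<longlongrightarrow> (K 0)\<^sup>2 - (\<integral>t\<in>{..0}. p t \<partial>lborel)) at_bot"
      by (intro tendsto_diff tendsto_const)
    have "((\<lambda>x. (K x)\<^sup>2) \<longlongrightarrow> (K 0)\<^sup>2 - (\<integral>t\<in>{..0}. p t \<partial>lborel)) at_bot"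
    proof (rule Lim_transform_eventually[OF L])
      show "\<forall>\<^sub>F x in at_bot. (K 0)\<^sup>2 - (\<integral>t\<in>{x..0}. p t \<partial>lborel) = (K x)\<^sup>2"
        using eventually_le_at_bot[of "0::real"] by eventually_elim (simp add: F1')
    qed
    moreover from this have "(K 0)\<^sup>2 - (\<integral>t\<in>{..0}. p t \<partial>lborel) = 0" by (rule vanish_bot[OF Ksq])
    ultimately show ?thesis by simp
  qed
  have bnd: "norm ((K x)\<^sup>2 * F x) \<le> norm ((K x)\<^sup>2) * B" for x
    using Fb[of x] by (simp add: norm_mult mult_left_mono)
  have topF: "((\<lambda>x. (K x)\<^sup>2 * F x) \<longlongrightarrow> 0) at_top"
    by (rule tendsto_0_le[OF top, of _ B]) (simp add: bnd)
  have botF: "((\<lambda>x. (K x)\<^sup>2 * F x) \<longlongrightarrow> 0) at_bot"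
    by (rule tendsto_0_le[OF bot, of _ B]) (simp add: bnd)
  have s1: "(\<lambda>n. (K (real n))\<^sup>2 * F (real n)) \<longlonglongrightarrow> 0"
    by (rule filterlim_compose[OF topF filterlim_real_sequentially])
  have s2: "(\<lambda>n. (K (- real n))\<^sup>2 * F (- real n)) \<longlonglongrightarrow> 0"
    by (rule filterlim_compose[OF botF filterlim_uminus_at_top[THEN iffD1, OF filterlim_real_sequentially]])
  have seq: "(\<lambda>n::nat. \<integral>x\<in>{- real n..real n}. G x \<partial>lborel) \<longlonglongrightarrow> 0"
  proof -
    have "(\<lambda>n. (K (real n))\<^sup>2 * F (real n) - (K (- real n))\<^sup>2 * F (- real n)) \<longlonglongrightarrow> 0 - 0"
      by (intro tendsto_diff s1 s2)
    moreover have "(\<integral>x\<in>{- real n..real n}. G x \<partial>lborel) = (K (real n))\<^sup>2 * F (real n) - (K (- real n))\<^sup>2 * F (- real n)" for n :: nat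
    proof -
      have nn: "- real n \<le> real n" by simp
      show ?thesis unfolding G_def by (rule F2[OF Km gm gl gKI KKI Kinc Fd F'c Fb F'b nn])
    qed
    ultimately show ?thesis by simp
  qed
  have dct: "(\<lambda>n::nat. \<integral>x\<in>{- real n..real n}. G x \<partial>lborel) \<longlonglongrightarrow> (\<integral>x. G x \<partial>lborel)"
    unfolding set_lebesgue_integral_def
  proof (rule integral_dominated_convergence[where w="\<lambda>x. norm (G x)"])
    show "G \<in> borel_measurable lborel" using GI by auto
    show "(\<lambda>x. indicat_real {- real n..real n} x *\<^sub>R G x) \<in> borel_measurable lborel" for n
      using GI by auto
    show "integrable lborel (\<lambda>x. norm (G x))" using GI by auto
    show "AE x in lborel. (\<lambda>n. indicat_real {- real n..real n} x *\<^sub>R G x) \<longlonglongrightarrow> G x"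
    proof (intro AE_I2 tendsto_eventually)
      fix x :: real
      obtain N :: nat where N: "\<bar>x\<bar> \<le> real N" using real_arch_simple by blast
      show "\<forall>\<^sub>F n in sequentially. indicat_real {- real n..real n} x *\<^sub>R G x = G x"
        using eventually_ge_at_top[of N]
        by eventually_elim (use N in \<open>auto simp: indicator_def\<close>)
    qed
    show "AE x in lborel. norm (indicat_real {- real n..real n} x *\<^sub>R G x) \<le> norm (G x)" for n
      by (intro AE_I2) (auto simp: indicator_def)
  qed
  from LIMSEQ_unique[OF dct seq] show "(\<integral>x. 2 * g x * K x * F x + (K x)\<^sup>2 * F' x \<partial>lborel) = 0"
    by (simp add: G_def)
qed

lemma inner_complex_Re: "x \<bullet> y = Re (cnj x * y)" for x y :: complex
  by (simp add: inner_complex_def)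

lemma cmod_sq_Re: "(cmod z)\<^sup>2 = Re (z * cnj z)"
  by (metis Re_complex_of_real complex_norm_square)

lemma Re_zero_iff_add_cnj: "Re z = 0 \<longleftrightarrow> z + cnj z = 0"
  by (simp add: complex_eq_iff)

lemma ptwise:
  fixes g h Fz fz f2 m :: complex
  assumes m: "cmod m = 1"
  shows "(cmod g)\<^sup>2 + h \<bullet> (2 * (Fz * h * cnj Fz + fz * cnj (f2 * h)))
    = (cmod (g - complex_of_real (sqrt 2) * m * cnj (Fz * h)))\<^sup>2
      + sqrt 2 * Re (cnj m * (2 * g * h * Fz + h\<^sup>2 * (f2 * (complex_of_real (sqrt 2) * m * cnj fz))))"
proof -
  define s where "s = complex_of_real (sqrt 2)"
  have mm: "m * cnj m = 1" using complex_norm_square[of m] m by simp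
  have ss: "s * s = 2" by (simp add: s_def flip: of_real_mult)
  have cs: "cnj s = s" by (simp add: s_def)
  have sr: "sqrt 2 * Re z = Re (s * z)" for z by (simp add: s_def)
  define A where "A = g * cnj g + cnj h * (2 * (Fz * h * cnj Fz + fz * cnj (f2 * h)))"
  define B where "B = (g - s * m * cnj (Fz * h)) * cnj (g - s * m * cnj (Fz * h))"
  define C where "C = s * (cnj m * (2 * g * h * Fz + h\<^sup>2 * (f2 * (s * m * cnj fz))))"
  have "A - B - C + cnj (A - B - C) = 0"
    unfolding A_def B_def C_def using mm ss cs
    by (simp add: algebra_simps power2_eq_square) algebra
  then have "Re (A - B - C) = 0" unfolding Re_zero_iff_add_cnj .
  then have "Re A = Re B + Re C" by simp
  then show ?thesis
    unfolding A_def B_def C_def cmod_sq_Re inner_complex_Re sr s_def by simp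
qed

lemma grad_W:
  assumes hol: "f holomorphic_on UNIV" and W: "\<And>z. W z = (cmod (f z))\<^sup>2"
  shows "grad W z = 2 * f z * cnj (deriv f z)"
proof -
  define G where "G = 2 * f z * cnj (deriv f z)"
  have df: "(f has_derivative (\<lambda>h. deriv f z * h)) (at z)"
    using holomorphic_derivI[OF hol open_UNIV UNIV_I] by (simp add: has_field_derivative_def)
  have Wf: "W = (\<lambda>z. f z \<bullet> f z)" by (auto simp: fun_eq_iff W power2_norm_eq_inner)
  have "(W has_derivative (\<lambda>h. f z \<bullet> (deriv f z * h) + (deriv f z * h) \<bullet> f z)) (at z)"
    unfolding Wf by (rule has_derivative_inner[OF df df])
  moreover have "(\<lambda>h. f z \<bullet> (deriv f z * h) + (deriv f z * h) \<bullet> f z) = (\<lambda>v. G \<bullet> v)"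
    by (auto simp: fun_eq_iff inner_complex_def algebra_simps G_def)
  ultimately have D: "(W has_derivative (\<lambda>v. G \<bullet> v)) (at z)" by simp
  have "(THE g. (W has_derivative (\<lambda>v. g \<bullet> v)) (at z)) = G"
  proof (rule the_equality)
    fix g assume "(W has_derivative (\<lambda>v. g \<bullet> v)) (at z)"
    then have e: "(\<lambda>v. g \<bullet> v) = (\<lambda>v. G \<bullet> v)" using has_derivative_unique D by blast
    from fun_cong[OF e, of 1] fun_cong[OF e, of \<i>] show "g = G"
      by (simp add: inner_complex_def complex_eq_iff)
  qed (fact D)
  then show ?thesis by (simp add: grad_def G_def)
qed

lemma hess_W:
  assumes hol: "f holomorphic_on UNIV" and W: "\<And>z. W z = (cmod (f z))\<^sup>2"
  shows "hess W z = (\<lambda>v. 2 * (deriv f z * v * cnj (deriv f z) + f z * cnj (deriv (deriv f) z * v)))"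
proof -
  define L where "L = (\<lambda>v. 2 * (deriv f z * v * cnj (deriv f z) + f z * cnj (deriv (deriv f) z * v)))"
  have gW: "grad W = (\<lambda>z. 2 * f z * cnj (deriv f z))" using grad_W[OF hol W] by auto
  have df: "(f has_derivative (\<lambda>h. deriv f z * h)) (at z)"
    using holomorphic_derivI[OF hol open_UNIV UNIV_I] by (simp add: has_field_derivative_def)
  have hol2: "deriv f holomorphic_on UNIV" by (rule holomorphic_deriv[OF hol open_UNIV])
  have ddf: "(deriv f has_derivative (\<lambda>h. deriv (deriv f) z * h)) (at z)"
    using holomorphic_derivI[OF hol2 open_UNIV UNIV_I] by (simp add: has_field_derivative_def)
  have cddf: "((\<lambda>z. cnj (deriv f z)) has_derivative (\<lambda>h. cnj (deriv (deriv f) z * h))) (at z)"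
    by (rule bounded_linear.has_derivative[OF bounded_linear_cnj ddf])
  have "((\<lambda>z. f z * cnj (deriv f z)) has_derivative (\<lambda>h. f z * cnj (deriv (deriv f) z * h) + deriv f z * h * cnj (deriv f z))) (at z)"
    by (rule has_derivative_mult[OF df cddf])
  then have "((\<lambda>z. 2 * (f z * cnj (deriv f z))) has_derivative (\<lambda>h. 2 * (f z * cnj (deriv (deriv f) z * h) + deriv f z * h * cnj (deriv f z)))) (at z)"
    by (rule has_derivative_mult_right)
  moreover have "(\<lambda>h. 2 * (f z * cnj (deriv (deriv f) z * h) + deriv f z * h * cnj (deriv f z))) = L"
    by (auto simp: L_def fun_eq_iff algebra_simps)
  ultimately have D: "(grad W has_derivative L) (at z)" unfolding gW by (simp add: mult.assoc)
  have "(THE L'. (grad W has_derivative L') (at z)) = L"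
  proof (rule the_equality)
    show "(grad W has_derivative L) (at z)" by (fact D)
    fix L' assume "(grad W has_derivative L') (at z)"
    then show "L' = L" using has_derivative_unique D by blast
  qed
  then show ?thesis by (simp add: hess_def L_def)
qed

lemma bounded_traj:
  fixes e :: "real \<Rightarrow> complex"
  assumes ce: "continuous_on UNIV e" and la: "(e \<longlongrightarrow> am) at_bot" and lb: "(e \<longlongrightarrow> ap) at_top"
  shows "\<exists>R. \<forall>x. cmod (e x) \<le> R"
proof -
  obtain X1 where X1: "\<And>x. X1 \<le> x \<Longrightarrow> dist (e x) ap < 1"
    using tendstoD[OF lb, of 1] by (auto simp: eventually_at_top_linorder)
  obtain X2 where X2: "\<And>x. x \<le> X2 \<Longrightarrow> dist (e x) am < 1"
    using tendstoD[OF la, of 1] by (auto simp: eventually_at_bot_linorder)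
  have "compact (e ` {X2..X1})" by (rule compact_continuous_image) (auto intro: continuous_on_subset[OF ce])
  then obtain B where B: "\<forall>y\<in>e ` {X2..X1}. norm y \<le> B" using compact_imp_bounded bounded_iff by metis
  have "cmod (e x) \<le> max B (max (cmod ap + 1) (cmod am + 1))" for x
  proof -
    consider "X1 \<le> x" | "x \<le> X2" | "x \<in> {X2..X1}" by force
    then show ?thesis
    proof cases
      case 1
      then have "dist (e x) ap < 1" by (rule X1)
      then have "cmod (e x) \<le> cmod ap + 1" using norm_triangle_ineq2[of "e x" ap] by (simp add: dist_norm)
      then show ?thesis by simp
    next
      case 2
      then have "dist (e x) am < 1" by (rule X2)
      then have "cmod (e x) \<le> cmod am + 1" using norm_triangle_ineq2[of "e x" am] by (simp add: dist_norm)
      then show ?thesis by simp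
    next
      case 3
      then show ?thesis using B by force
    qed
  qed
  then show ?thesis by blast
qed

lemma cont_bdd_ball:
  fixes \<phi> :: "complex \<Rightarrow> complex"
  assumes "continuous_on UNIV \<phi>"
  shows "\<exists>B\<ge>0. \<forall>z. cmod z \<le> R \<longrightarrow> cmod (\<phi> z) \<le> B"
proof -
  have "compact (\<phi> ` cball 0 R)" by (rule compact_continuous_image) (auto intro: continuous_on_subset[OF assms])
  then obtain B where B: "\<forall>y\<in>\<phi> ` cball 0 R. norm y \<le> B" using compact_imp_bounded bounded_iff by metis
  have "\<forall>z. cmod z \<le> R \<longrightarrow> cmod (\<phi> z) \<le> max B 0" using B by (force simp: le_max_iff_disj)
  then show ?thesis by (intro exI[of _ "max B 0"]) auto
qed

lemma norm_diff_sq_le: "(cmod (a - b))\<^sup>2 \<le> 2 * (cmod a)\<^sup>2 + 2 * (cmod b)\<^sup>2"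
proof -
  have "cmod (a - b) \<le> cmod a + cmod b" by (rule norm_triangle_ineq4)
  then have "(cmod (a - b))\<^sup>2 \<le> (cmod a + cmod b)\<^sup>2" by (intro power_mono) auto
  also have "\<dots> \<le> 2 * (cmod a)\<^sup>2 + 2 * (cmod b)\<^sup>2"
  proof -
    have "0 \<le> (cmod a - cmod b)\<^sup>2" by simp
    then show ?thesis by (simp add: power2_eq_square algebra_simps)
  qed
  finally show ?thesis .
qed

lemma borel_measurable_cnj_comp[measurable (raw)]:
  fixes k :: "'a \<Rightarrow> complex"
  assumes "k \<in> borel_measurable M"
  shows "(\<lambda>x. cnj (k x)) \<in> borel_measurable M"
proof -
  have "cnj \<in> borel_measurable borel"
    by (rule borel_measurable_continuous_onI) (intro continuous_intros)
  from measurable_compose[OF assms this] show ?thesis by (simp add: o_def)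
qed

theorem mainTheorem4:
  fixes f :: "complex \<Rightarrow> complex" and W :: "complex \<Rightarrow> real"
    and e e' e'' :: "real \<Rightarrow> complex" and am ap m :: complex
  assumes "f holomorphic_on UNIV"
    and "\<And>z. W z = (cmod (f z))\<^sup>2"
    and "am \<noteq> ap"
    and "nondegenerate_zero W am" and "nondegenerate_zero W ap"
    and "heteroclinic W am ap e e' e''"
    and "cmod m = 1"
    and "\<And>x. e' x = complex_of_real (sqrt 2) * m * cnj (f (e x))"
  shows "\<forall>h g. H1_weak h g \<longrightarrow>
    (\<integral>x. (cmod (g x))\<^sup>2 + h x \<bullet> hess W (e x) (h x) \<partial>lborel) =
    (\<integral>x. (cmod (g x - complex_of_real (sqrt 2) * m * cnj (deriv f (e x) * h x)))\<^sup>2 \<partial>lborel)"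
proof (intro allI impI)
  fix h g assume H1: "H1_weak h g"
  have hm[measurable]: "h \<in> borel_measurable lborel" and gm[measurable]: "g \<in> borel_measurable lborel"
    and hsq: "integrable lborel (\<lambda>x. (cmod (h x))\<^sup>2)" and gsq: "integrable lborel (\<lambda>x. (cmod (g x))\<^sup>2)"
    using H1 by (auto simp: H1_weak_def square_integrable_def)
  obtain K where hK: "AE x in lborel. h x = K x" and Km[measurable]: "K \<in> borel_measurable lborel"
    and Kinc: "\<And>x y. x \<le> y \<Longrightarrow> K y - K x = (\<integral>t\<in>{x..y}. g t \<partial>lborel)"
    using reg[OF H1] by blast
  have Ksq: "integrable lborel (\<lambda>x. (cmod (K x))\<^sup>2)"
  proof -
    have "AE x in lborel. (cmod (h x))\<^sup>2 = (cmod (K x))\<^sup>2" using hK by eventually_elim simp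
    then show ?thesis using hsq by (subst integrable_cong_AE[symmetric]) auto
  qed
  have ed: "\<And>x. (e has_vector_derivative e' x) (at x)" and la: "(e \<longlongrightarrow> am) at_bot" and lb: "(e \<longlongrightarrow> ap) at_top"
    using assms(6) by (auto simp: heteroclinic_def)
  have ce: "continuous_on UNIV e"
    using ed by (meson continuous_at_imp_continuous_on has_vector_derivative_continuous)
  obtain R where eR: "\<And>x. cmod (e x) \<le> R" using bounded_traj[OF ce la lb] by blast
  have hol2: "deriv f holomorphic_on UNIV" by (rule holomorphic_deriv[OF assms(1) open_UNIV])
  have hol3: "deriv (deriv f) holomorphic_on UNIV" by (rule holomorphic_deriv[OF hol2 open_UNIV])
  have cf: "continuous_on UNIV f" by (rule holomorphic_on_imp_continuous_on[OF assms(1)])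
  have cdf: "continuous_on UNIV (deriv f)" by (rule holomorphic_on_imp_continuous_on[OF hol2])
  have cddf: "continuous_on UNIV (deriv (deriv f))" by (rule holomorphic_on_imp_continuous_on[OF hol3])
  obtain B1 where B1: "B1 \<ge> 0" "\<And>z. cmod z \<le> R \<Longrightarrow> cmod (f z) \<le> B1" using cont_bdd_ball[OF cf] by blast
  obtain B2 where B2: "B2 \<ge> 0" "\<And>z. cmod z \<le> R \<Longrightarrow> cmod (deriv f z) \<le> B2" using cont_bdd_ball[OF cdf] by blast
  obtain B3 where B3: "B3 \<ge> 0" "\<And>z. cmod z \<le> R \<Longrightarrow> cmod (deriv (deriv f) z) \<le> B3" using cont_bdd_ball[OF cddf] by blast
  define F where "F x = deriv f (e x)" for x
  define F' where "F' x = deriv (deriv f) (e x) * e' x" for x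
  have c1: "continuous_on UNIV (\<lambda>x. deriv (deriv f) (e x))" by (rule continuous_on_compose2[OF cddf ce]) auto
  have c2: "continuous_on UNIV (\<lambda>x. f (e x))" by (rule continuous_on_compose2[OF cf ce]) auto
  have c3: "continuous_on UNIV F" unfolding F_def by (rule continuous_on_compose2[OF cdf ce]) auto
  have F'e: "F' x = deriv (deriv f) (e x) * (complex_of_real (sqrt 2) * m * cnj (f (e x)))" for x
    by (simp add: F'_def assms(8))
  have F'c: "continuous_on UNIV F'"
    unfolding F'e[abs_def] by (intro continuous_intros c1 c2)
  have Fd: "(F has_vector_derivative F' x) (at x)" for x
  proof -
    have "((deriv f \<circ> e) has_vector_derivative (e' x * deriv (deriv f) (e x))) (at x)"
      by (rule field_vector_diff_chain_at[OF ed holomorphic_derivI[OF hol2 open_UNIV UNIV_I]])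
    then show ?thesis unfolding F_def[abs_def] F'_def by (simp add: o_def mult.commute)
  qed
  define BB where "BB = B2 + B3 * (sqrt 2 * B1)"
  have BBp: "0 \<le> B3 * (sqrt 2 * B1)" using B1(1) B3(1) by simp
  have Fb: "norm (F x) \<le> BB" for x
    using B2(2)[OF eR[of x]] BBp unfolding F_def BB_def by simp
  have F'b: "norm (F' x) \<le> BB" for x
  proof -
    have "norm (F' x) = cmod (deriv (deriv f) (e x)) * (sqrt 2 * cmod (f (e x)))"
      by (simp add: F'e norm_mult assms(7))
    also have "\<dots> \<le> B3 * (sqrt 2 * B1)"
      using B3(2)[OF eR[of x]] B1(2)[OF eR[of x]] B3(1) by (intro mult_mono) auto
    finally show ?thesis using B2(1) by (simp add: BB_def)
  qed
  define G where "G x = 2 * g x * K x * F x + (K x)\<^sup>2 * F' x" for x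
  have GI: "integrable lborel G" and G0: "(\<integral>x. G x \<partial>lborel) = 0"
    using key[OF Km Ksq gm gsq Kinc Fd F'c Fb F'b] unfolding G_def[abs_def] by auto
  define c where "c = complex_of_real (sqrt 2)"
  define L where "L x = (cmod (g x))\<^sup>2 + h x \<bullet> hess W (e x) (h x)" for x
  define Rr where "Rr x = (cmod (g x - c * m * cnj (deriv f (e x) * h x)))\<^sup>2" for x
  have pt: "L x = Rr x + sqrt 2 * Re (cnj m * (2 * g x * h x * F x + (h x)\<^sup>2 * F' x))" for x
    unfolding L_def Rr_def hess_W[OF assms(1) assms(2)] F_def F'e c_def by (rule ptwise[OF assms(7)])
  have AE: "AE x in lborel. L x = Rr x + sqrt 2 * Re (cnj m * G x)"
    using hK by eventually_elim (simp add: pt G_def)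
  have [measurable]: "(\<lambda>x. f (e x)) \<in> borel_measurable lborel" by (simp add: borel_measurable_continuous_onI[OF c2])
  have [measurable]: "(\<lambda>x. deriv (deriv f) (e x)) \<in> borel_measurable lborel" by (simp add: borel_measurable_continuous_onI[OF c1])
  have [measurable]: "(\<lambda>x. deriv f (e x)) \<in> borel_measurable lborel" using borel_measurable_continuous_onI[OF c3] by (simp add: F_def[abs_def])
  have Lm: "L \<in> borel_measurable lborel"
    unfolding L_def[abs_def] hess_W[OF assms(1) assms(2)] by measurable
  have Rm: "Rr \<in> borel_measurable lborel" unfolding Rr_def[abs_def] by measurable
  have RI: "integrable lborel Rr"
  proof (rule Bochner_Integration.integrable_bound[where f="\<lambda>x. 2 * (cmod (g x))\<^sup>2 + 2 * (2 * BB\<^sup>2 * (cmod (h x))\<^sup>2)"])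
    show "integrable lborel (\<lambda>x. 2 * (cmod (g x))\<^sup>2 + 2 * (2 * BB\<^sup>2 * (cmod (h x))\<^sup>2))"
      using gsq hsq by simp
    show "Rr \<in> borel_measurable lborel" by (fact Rm)
    show "AE x in lborel. norm (Rr x) \<le> norm (2 * (cmod (g x))\<^sup>2 + 2 * (2 * BB\<^sup>2 * (cmod (h x))\<^sup>2))"
    proof (intro AE_I2)
      fix x
      have n: "cmod (c * m * cnj (deriv f (e x) * h x)) = sqrt 2 * (cmod (F x) * cmod (h x))"
        by (simp add: c_def norm_mult assms(7) F_def)
      have "cmod (F x) * cmod (h x) \<le> BB * cmod (h x)" using Fb[of x] by (intro mult_right_mono) auto
      then have "(cmod (c * m * cnj (deriv f (e x) * h x)))\<^sup>2 \<le> (sqrt 2 * (BB * cmod (h x)))\<^sup>2"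
        unfolding n by (intro power_mono mult_left_mono) auto
      also have "\<dots> = 2 * BB\<^sup>2 * (cmod (h x))\<^sup>2" by (simp add: power_mult_distrib)
      finally have "Rr x \<le> 2 * (cmod (g x))\<^sup>2 + 2 * (2 * BB\<^sup>2 * (cmod (h x))\<^sup>2)"
        unfolding Rr_def using norm_diff_sq_le[of "g x" "c * m * cnj (deriv f (e x) * h x)"] by linarith
      then show "norm (Rr x) \<le> norm (2 * (cmod (g x))\<^sup>2 + 2 * (2 * BB\<^sup>2 * (cmod (h x))\<^sup>2))"
        by (simp add: Rr_def)
    qed
  qed
  have ReI: "integrable lborel (\<lambda>x. sqrt 2 * Re (cnj m * G x))" using GI by simp
  have "(\<integral>x. L x \<partial>lborel) = (\<integral>x. Rr x + sqrt 2 * Re (cnj m * G x) \<partial>lborel)"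
    by (rule integral_cong_AE[OF Lm _ AE]) (use Rm ReI in auto)
  also have "\<dots> = (\<integral>x. Rr x \<partial>lborel) + sqrt 2 * Re (cnj m * (\<integral>x. G x \<partial>lborel))"
    using RI ReI GI by (simp add: Bochner_Integration.integral_add)
  also have "\<dots> = (\<integral>x. Rr x \<partial>lborel)" using G0 by simp
  finally show "(\<integral>x. (cmod (g x))\<^sup>2 + h x \<bullet> hess W (e x) (h x) \<partial>lborel) =
    (\<integral>x. (cmod (g x - complex_of_real (sqrt 2) * m * cnj (deriv f (e x) * h x)))\<^sup>2 \<partial>lborel)"
    unfolding L_def Rr_def c_def .
qed

end
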